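(* Suppose Assumption (A2) holds and, in addition, $B$ is $\mu$-strongly monotone w.r.t. $S$ for some $\mu>0$ (i.e. $\langle Bx-By,x-y\rangle\ge\mu\|x-y\|_S^2$ for all $x,y$); let $x^*$ be the solution of $0\in Ax+Bx+Cx$. Let $p\in(0,1)$, $\lambda=1-p$, $L\ge\frac{3-p}{2}$, $\varepsilon_3>0$, $\alpha>0$, and suppose $L_k+\alpha\le\frac{1-\sqrt p}{4}$ for all $k$. Let $\bar L=\sup_kL_k$ and $\gamma=\min\{\frac{\sqrt p}{2\theta},\frac p\beta,\frac{\alpha}{\bar L\theta}\}$ (with $\frac{\alpha}{0}=+\infty$). For $k\ge1$ let $$c_k=\min\Big\{\frac{\gamma\mu}{1+\frac{L_k}{2L\varepsilon_3}},\ \frac{2L\big(1-p-L_{k-1}-\alpha-(1-p)(\alpha+L_k)\big)}{(1-p)L_k(\varepsilon_3+1)},\ \frac{Lp\big(1-\sqrt p-4(L_k+\alpha)\big)}{2(1-p)(4+p)+2pL_k(\varepsilon_3+1)}\Big\}$$ (the middle term read as $+\infty$ if $L_k=0$), and let $c$ be any real number with $0\le c\le c_k$ for all $k\ge1$. Then the sequences generated by Algorithm SVR-NFBHF-M (with this $\lambda,p,\gamma$) satisfy, for all $k\ge1$, $$(1-p-L_k)\,\mathbb E\|x_{k+1}-x^*\|_S^2\le\frac{\mathbb E\big[(1-p)\|x_1-x^*\|_S^2+\|\omega_1-x^*\|_S^2+d_1\big]}{(1+c/(2L))^k},$$ where $d_1=2\langle u_1,x_1-x^*\rangle+L_0\|y_0-\bar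 x_0\|_S^2$.
   Context: $\mathcal X$ is a separable real Hilbert space with Borel $\sigma$-algebra; all random variables live on a probability space $(\Omega,\mathcal F,P)$; $\mathbb E$ is (full) expectation. $\mathcal P(\mathcal X)$ is the set of bounded linear self-adjoint strongly positive operators $S$ ($\langle Sx,x\rangle\ge m\|x\|^2$, $m>0$); $\langle x,y\rangle_S=\langle Sx,y\rangle$, $\|x\|_S=\sqrt{\langle Sx,x\rangle}$. For $S\in\mathcal P(\mathcal X)$, $T$ is $L$-Lipschitz w.r.t. $S$ if $\|Tx-Ty\|_{S^{-1}}\le L\|x-y\|_S$, and $\beta^{-1}$-cocoercive w.r.t. $S$ if $\langle Tx-Ty,x-y\rangle\ge\beta^{-1}\|Tx-Ty\|_{S^{-1}}^2$. Assumption (A2): fix $S\in\mathcal P(\mathcal X)$. (i) $A:\mathcal X\to2^{\mathcal X}$ is maximally monotone; (ii) $B=\sum_{i=1}^NB_i$ where each $B_i:\mathcal X\to\mathcal X$ is monotone and Lipschitz; $Q$ is a probability distribution on $\{1,\dots,N\}$ and $B_\xi:\mathcal X\to\mathcal X$ ($\xi\in\{1,\dots,N\}$) are operators (stochastic oracle) with $\mathbb E_{\xi\sim Q}[B_\xi(x)]=B(x)$ for all $x$ and $\mathbb E_{\xi\sim Q}\|B_\xi u-B_\xi v\|_{S^{-1}}^2\le\theta^2\|u-v\|_S^2$ for all $u,v$, some $\theta>0$; (iii) $C:\mathcal X\to\mathcal X$ is $\beta^{-1}$-cocoercive w.r.t. $S$, $\beta>0$; (iv) the solution set $\Omega^*=\{x:0\in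 Ax+Bx+Cx\}$ is nonempty; (v) $\gamma>0$ and for each $k$, $M_k:\mathcal X\to\mathcal X$ is an operator such that $\gamma M_k-S$ is $L_k$-Lipschitz w.r.t. $S$ with $L_k\in[0,1)$ (so $(M_k+A)^{-1}$ is single-valued with full domain). Algorithm SVR-NFBHF-M: parameters $p\in(0,1]$, $\lambda\ge0$; initial $x_0,u_0\in\mathcal X$, $\omega_0=x_0$. For $k=0,1,\dots$: $\bar x_k=\lambda x_k+(1-\lambda)\omega_k$; $y_k=(M_k+A)^{-1}\big(M_k\bar x_k-(B+C)\omega_k+\gamma^{-1}u_k\big)$; $u_{k+1}=(\gamma M_k-S)y_k-(\gamma M_k-S)\bar x_k$; draw $\xi_k\sim Q$ independently of the past; $x_{k+1}=y_k-\gamma S^{-1}B_{\xi_k}y_k+\gamma S^{-1}B_{\xi_k}\omega_k$; $\omega_{k+1}=x_{k+1}$ with probability $p$ and $\omega_{k+1}=\omega_k$ with probability $1-p$ (independent coin). *)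

theory Defs
  imports "HOL-Analysis.Analysis" "HOL-Probability.Probability"
begin

text \<open>The dual norm
  with respect to S^{-1} is norm_S (inv S) x, where inv S is the inverse of the
  (bijective, since strongly positive bounded self-adjoint) operator S.\<close>
definition norm_S :: "('a::real_inner \<Rightarrow> 'a) \<Rightarrow> 'a \<Rightarrow> real" where
  "norm_S S x = sqrt (inner (S x) x)"

definition strongly_pos_sa :: "('a::real_inner \<Rightarrow> 'a) \<Rightarrow> bool" where
  "strongly_pos_sa S \<longleftrightarrow> bounded_linear S \<and> (\<forall>x y. inner (S x) y = inner x (S y))
     \<and> (\<exists>m>0. \<forall>x. inner (S x) x \<ge> m * (norm x)\<^sup>2)"

definition lipschitz_wrt :: "('a::real_inner \<Rightarrow> 'a) \<Rightarrow> real \<Rightarrow> ('a \<Rightarrow> 'a) \<Rightarrow> bool" where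
  "lipschitz_wrt S L T \<longleftrightarrow> (\<forall>x y. norm_S (inv S) (T x - T y) \<le> L * norm_S S (x - y))"

definition cocoercive_wrt :: "('a::real_inner \<Rightarrow> 'a) \<Rightarrow> real \<Rightarrow> ('a \<Rightarrow> 'a) \<Rightarrow> bool" where
  "cocoercive_wrt S \<beta> T \<longleftrightarrow>
     (\<forall>x y. inner (T x - T y) (x - y) \<ge> (1 / \<beta>) * (norm_S (inv S) (T x - T y))\<^sup>2)"

definition strongly_monotone_wrt :: "('a::real_inner \<Rightarrow> 'a) \<Rightarrow> real \<Rightarrow> ('a \<Rightarrow> 'a) \<Rightarrow> bool" where
  "strongly_monotone_wrt S \<mu> T \<longleftrightarrow>
     (\<forall>x y. inner (T x - T y) (x - y) \<ge> \<mu> * (norm_S S (x - y))\<^sup>2)"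

definition monotone_op :: "('a::real_inner \<Rightarrow> 'a) \<Rightarrow> bool" where
  "monotone_op T \<longleftrightarrow> (\<forall>x y. inner (T x - T y) (x - y) \<ge> 0)"

definition lipschitz_op :: "('a::real_normed_vector \<Rightarrow> 'a) \<Rightarrow> bool" where
  "lipschitz_op T \<longleftrightarrow> (\<exists>K. \<forall>x y. norm (T x - T y) \<le> K * norm (x - y))"

definition monotone_setop :: "('a::real_inner \<Rightarrow> 'a set) \<Rightarrow> bool" where
  "monotone_setop A \<longleftrightarrow> (\<forall>x y u v. u \<in> A x \<longrightarrow> v \<in> A y \<longrightarrow> inner (u - v) (x - y) \<ge> 0)"

definition maximal_monotone :: "('a::real_inner \<Rightarrow> 'a set) \<Rightarrow> bool" where
  "maximal_monotone A \<longleftrightarrow> monotone_setop A \<and>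
     (\<forall>x u. (\<forall>y v. v \<in> A y \<longrightarrow> inner (u - v) (x - y) \<ge> 0) \<longrightarrow> u \<in> A x)"

end

theory Submission
  imports Defs "HOL-Probability.Probability"
begin


locale spos =
  fixes S :: "'a::{real_inner, complete_space} \<Rightarrow> 'a"
  assumes Sp: "strongly_pos_sa S"
begin

lemma S_bl: "bounded_linear S" using Sp unfolding strongly_pos_sa_def by blast
lemma S_lin: "linear S" using S_bl bounded_linear.linear by blast
lemma S_sym: "inner (S x) y = inner x (S y)" using Sp unfolding strongly_pos_sa_def by blast
lemma S_coer: obtains m where "m > 0" "\<And>x. inner (S x) x \<ge> m * (norm x)\<^sup>2"
proof -
  have "\<exists>m>0. \<forall>x. inner (S x) x \<ge> m * (norm x)\<^sup>2" using Sp unfolding strongly_pos_sa_def by blast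
  then show thesis using that by blast
qed

lemma S_diff: "S (a - b) = S a - S b" using S_lin by (simp add: linear_diff)
lemma S_add: "S (a + b) = S a + S b" using S_lin by (simp add: linear_add)
lemma S_scale: "S (c *\<^sub>R a) = c *\<^sub>R S a" using S_lin by (simp add: linear_scale)

lemma Ssq_nonneg: "0 \<le> inner (S x) x"
proof -
  obtain m where "m > 0" "\<And>x. inner (S x) x \<ge> m * (norm x)\<^sup>2" using S_coer by blast
  then show ?thesis by (meson order_trans mult_nonneg_nonneg less_imp_le zero_le_power2)
qed

lemma Ssq_zero: "inner (S x) x = 0 \<Longrightarrow> x = 0"
proof -
  assume h: "inner (S x) x = 0"
  obtain m where m: "m > 0" "\<And>x. inner (S x) x \<ge> m * (norm x)\<^sup>2" using S_coer by blast
  have "m * (norm x)\<^sup>2 \<le> 0" using m(2)[of x] h by simp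
  then have "(norm x)\<^sup>2 \<le> 0" using m(1) by (simp add: mult_le_0_iff)
  then show "x = 0" by simp
qed

lemma S_inj: "inj S"
proof (rule injI)
  fix x y assume "S x = S y"
  then have "inner (S (x - y)) (x - y) = 0" by (simp add: S_diff)
  then show "x = y" using Ssq_zero by fastforce
qed

lemma S_surj: "surj S"
proof -
  obtain m where m: "m > 0" "\<And>x. inner (S x) x \<ge> m * (norm x)\<^sup>2" using S_coer by blast
  obtain K0 where K0: "\<And>x. norm (S x) \<le> norm x * K0"
    using S_bl bounded_linear.bounded by blast
  define K where "K = max K0 (max m 1)"
  have Kpos: "K > 0" and mK: "m \<le> K"
    unfolding K_def using K0 m(1) by auto
  have KK: "norm (S x) \<le> K * norm x" for x
  proof -
    have "norm x * K0 \<le> norm x * K" unfolding K_def by (intro mult_left_mono) auto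
    then show ?thesis using K0[of x] by (simp add: mult.commute)
  qed
  have mleK: "m * (norm x)\<^sup>2 \<le> K * (norm x)\<^sup>2" for x using mK by (simp add: mult_right_mono)
  define t where "t = m / K^2"
  have tpos: "t > 0" unfolding t_def using m(1) Kpos by simp
  define c where "c = sqrt (1 - m^2 / K^2)"
  have mK2: "m^2 / K^2 \<le> 1" using mK m(1) by (simp add: power_mono)
  have c0: "0 \<le> c" unfolding c_def using mK2 by simp
  have c1: "c < 1" unfolding c_def using m(1) Kpos mK2 by (simp add: real_sqrt_lt_1_iff)
  show ?thesis
  unfolding surj_def
  proof
    fix z
    define f where "f = (\<lambda>x. x - t *\<^sub>R (S x - z))"
    have contr: "dist (f x) (f y) \<le> c * dist x y" for x y
    proof -
      define d where "d = x - y"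
      have fd: "f x - f y = d - t *\<^sub>R S d" unfolding f_def d_def by (simp add: S_diff algebra_simps)
      have "(norm (d - t *\<^sub>R S d))\<^sup>2 = (norm d)\<^sup>2 - 2 * t * inner (S d) d + t^2 * (norm (S d))\<^sup>2"
        unfolding power2_norm_eq_inner by (simp add: inner_diff_left inner_diff_right inner_commute algebra_simps power2_eq_square)
      also have "\<dots> \<le> (norm d)\<^sup>2 - 2 * t * (m * (norm d)\<^sup>2) + t^2 * (K * norm d)\<^sup>2"
        using m(2)[of d] KK[of d] tpos
        by (intro add_mono diff_mono mult_left_mono power_mono) auto
      also have "\<dots> = (1 - m^2 / K^2) * (norm d)\<^sup>2" unfolding t_def using Kpos
        by (simp add: field_simps power2_eq_square)
      finally have "(norm (f x - f y))\<^sup>2 \<le> (c * norm d)\<^sup>2" unfolding c_def fd using mK2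
        by (simp add: power_mult_distrib)
      then have "norm (f x - f y) \<le> c * norm d" using c0 by (meson abs_le_square_iff abs_of_nonneg norm_ge_zero mult_nonneg_nonneg power2_le_imp_le)
      then show ?thesis by (simp add: dist_norm d_def)
    qed
    obtain x where "f x = x" using banach_fix_type[OF c0 c1] contr by blast
    then have "t *\<^sub>R (S x - z) = 0" unfolding f_def by simp
    then have "S x = z" using tpos by simp
    then show "\<exists>x. z = S x" by auto
  qed
qed

lemma S_bij: "bij S" using S_inj S_surj by (simp add: bij_def)
lemma S_inv1[simp]: "S (inv S v) = v" using S_surj by (simp add: surj_f_inv_f)
lemma S_inv2[simp]: "inv S (S v) = v" using S_inj by simp

lemma Ssq_expand: "inner (S (a + b)) (a + b) = inner (S a) a + 2 * inner (S a) b + inner (S b) b"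
proof -
  have "inner (S b) a = inner (S a) b" by (metis S_sym inner_commute)
  then show ?thesis by (simp add: S_add inner_add_left inner_add_right)
qed

lemma Ssq_expand_diff: "inner (S (a - b)) (a - b) = inner (S a) a - 2 * inner (S a) b + inner (S b) b"
proof -
  have "inner (S b) a = inner (S a) b" by (metis S_sym inner_commute)
  then show ?thesis by (simp add: S_diff inner_diff_left inner_diff_right)
qed

lemma Ssq_scale: "inner (S (c *\<^sub>R a)) (c *\<^sub>R a) = c^2 * inner (S a) a"
  by (simp add: S_scale power2_eq_square)

lemma nS_nonneg: "0 \<le> norm_S S a" unfolding norm_S_def by (rule real_sqrt_ge_zero[OF Ssq_nonneg])

lemma nS_sq: "(norm_S S a)\<^sup>2 = inner (S a) a"
  unfolding norm_S_def by (rule real_sqrt_pow2[OF Ssq_nonneg])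

lemma Si_form: "inner (inv S v) v = inner (S (inv S v)) (inv S v)"
  by (metis S_inv1 inner_commute)

lemma Si_nonneg: "0 \<le> inner (inv S v) v"
  using Si_form Ssq_nonneg by metis

lemma nSi_sq: "(norm_S (inv S) v)\<^sup>2 = inner (inv S v) v"
  unfolding norm_S_def by (rule real_sqrt_pow2[OF Si_nonneg])

lemma nSi_eq: "norm_S (inv S) v = norm_S S (inv S v)"
  unfolding norm_S_def using Si_form by simp

lemma nSi_nonneg: "0 \<le> norm_S (inv S) v" unfolding norm_S_def by (rule real_sqrt_ge_zero[OF Si_nonneg])

lemma CS_sq: "(inner (S a) b)\<^sup>2 \<le> inner (S a) a * inner (S b) b"
proof (cases "b = 0")
  case True then show ?thesis by (simp add: S_lin linear_0)
next
  case False
  then have pos: "inner (S b) b > 0" using Ssq_nonneg Ssq_zero by (metis order_le_less)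
  define t where "t = inner (S a) b / inner (S b) b"
  have "0 \<le> inner (S (a - t *\<^sub>R b)) (a - t *\<^sub>R b)" by (rule Ssq_nonneg)
  also have "\<dots> = inner (S a) a - 2 * t * inner (S a) b + t^2 * inner (S b) b"
    by (simp add: Ssq_expand_diff Ssq_scale S_scale power2_eq_square)
  also have "\<dots> = inner (S a) a - (inner (S a) b)\<^sup>2 / inner (S b) b"
    unfolding t_def using pos by (simp add: field_simps power2_eq_square del: inner_commute)
  finally show ?thesis using pos by (simp add: field_simps)
qed

lemma CS: "\<bar>inner (S a) b\<bar> \<le> norm_S S a * norm_S S b"
proof -
  have "(inner (S a) b)\<^sup>2 \<le> (norm_S S a * norm_S S b)\<^sup>2"
    using CS_sq by (simp add: power_mult_distrib nS_sq)
  then show ?thesis using nS_nonneg[of a] nS_nonneg[of b]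
    by (metis abs_le_square_iff abs_mult abs_of_nonneg)
qed

lemma CSi: "\<bar>inner v b\<bar> \<le> norm_S (inv S) v * norm_S S b"
  using CS[of "inv S v" b] by (simp add: nSi_eq)

lemma CSii: "\<bar>inner u (inv S g)\<bar> \<le> norm_S (inv S) u * norm_S (inv S) g"
  using CS[of "inv S u" "inv S g"] by (simp add: nSi_eq)

lemma CSi_le: "inner v b \<le> norm_S (inv S) v * norm_S S b" using CSi by (meson abs_le_D1)
lemma CSi_ge: "- (norm_S (inv S) v * norm_S S b) \<le> inner v b" using CSi by (meson abs_le_D2 minus_le_iff)
lemma CS_le: "inner (S a) b \<le> norm_S S a * norm_S S b" using CS by (meson abs_le_D1)

lemma nS_triangle: "norm_S S (a + b) \<le> norm_S S a + norm_S S b"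
proof -
  have "(norm_S S (a + b))\<^sup>2 \<le> (norm_S S a + norm_S S b)\<^sup>2"
    using CS_le[of a b] by (simp add: nS_sq Ssq_expand power2_sum)
  then show ?thesis using nS_nonneg by (meson add_nonneg_nonneg power2_le_imp_le)
qed

lemma nS_scale: "norm_S S (c *\<^sub>R a) = \<bar>c\<bar> * norm_S S a"
  unfolding norm_S_def by (simp add: S_scale real_sqrt_mult)

lemma nS_zero_iff: "norm_S S a = 0 \<longleftrightarrow> a = 0"
  unfolding norm_S_def using Ssq_zero by (auto simp: S_lin linear_0)

lemma invS_diff: "inv S (a - b) = inv S a - inv S b"
  using S_inj by (rule injD) (simp add: S_diff)
lemma invS_add: "inv S (a + b) = inv S a + inv S b"
  using S_inj by (rule injD) (simp add: S_add)
lemma invS_scale: "inv S (c *\<^sub>R a) = c *\<^sub>R inv S a"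
  using S_inj by (rule injD) (simp add: S_scale)

end


lemma real_core:
  fixes p q r Lc Lp eps g gb gm Y A W V :: real
  assumes q: "0 < q" "q < 1" "p = q^2"
    and r: "0 \<le> r"
    and Lc: "0 \<le> Lc" and Lp: "0 \<le> Lp" "Lp \<le> (1 - q) / 4"
    and eps: "eps > 0"
    and g: "0 \<le> g" "g \<le> q / 2"
    and gb: "0 \<le> gb" "gb \<le> p"
    and gm: "r * (6 - 2 * p) + 2 * r * Lc / eps \<le> 2 * gm"
    and c3: "4 * r * ((1 - p) * (4 + p) + p * Lc * (eps + 1)) + 4 * p * Lc \<le> p * (1 - q)"
    and nn: "0 \<le> Y" "0 \<le> A" "0 \<le> W" "0 \<le> V"
    and V: "(A - p * W)^2 \<le> (1 - p)^2 * V^2"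
  shows "r * (Y^2 + 2 * g * W * Y + g^2 * W^2 + 2 * Lc * A * Y + 2 * g * Lc * A * W + (1 - p) * (Y + W)^2 + Lc * A^2)
         \<le> 2 * gm * Y^2 + (1 - p - Lp) * V^2 + p * W^2 - Lc * A^2 - (gb / 2 + g^2) * W^2 - 2 * g * Lc * A * W"
proof -
  have p0: "0 < p" using q by simp
  have qq: "q * q < 1 * 1" using q by (intro mult_strict_mono) auto
  have p1: "p < 1" using q(3) qq by (simp add: power2_eq_square)
  have h1: "2 * g * W * Y \<le> 2 * Y^2 + g^2 * W^2 / 2"
  proof -
    have "0 \<le> (2 * Y - g * W)^2" by simp
    then show ?thesis by (simp add: power2_eq_square algebra_simps)
  qed
  have h2: "2 * Lc * A * Y \<le> Lc * (eps * A^2 + Y^2 / eps)"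
  proof -
    have "0 \<le> (eps * A - Y)^2" by simp
    then have "2 * eps * (A * Y) \<le> eps * (eps * A^2) + Y^2" by (simp add: power2_eq_square algebra_simps)
    then have "2 * (A * Y) \<le> eps * A^2 + Y^2 / eps" using eps by (simp add: field_simps)
    then have "Lc * (2 * (A * Y)) \<le> Lc * (eps * A^2 + Y^2 / eps)" using Lc by (rule mult_left_mono)
    then show ?thesis by (simp add: algebra_simps)
  qed
  have h3: "(Y + W)^2 \<le> 3 * Y^2 + 3 / 2 * W^2"
  proof -
    have "0 \<le> (2 * Y - W)^2" by simp
    then show ?thesis by (simp add: power2_eq_square algebra_simps)
  qed
  define lam where "lam = Lc * (1 + r * (1 + eps))"
  have lamLc: "(1 + r) * Lc \<le> lam"
  proof -
    have "0 \<le> r * eps" using r eps by simp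
    then have "r \<le> r * (1 + eps)" by (simp add: algebra_simps)
    then have "Lc * (1 + r) \<le> Lc * (1 + r * (1 + eps))" using Lc by (intro mult_left_mono) auto
    then show ?thesis unfolding lam_def by (simp add: mult.commute)
  qed
  have lam0: "0 \<le> lam" unfolding lam_def using Lc r eps by simp
  define rho where "rho = r * (1 - p) * (4 + p)"
  have rho0: "0 \<le> rho" unfolding rho_def using r p1 p0 by (intro mult_nonneg_nonneg) auto
  have c3': "4 * rho + 4 * p * lam \<le> p * (1 - q)"
    using c3 unfolding rho_def lam_def by (simp add: algebra_simps)
  have lam_le: "lam \<le> (1 - q) / 4"
  proof -
    have "p * (4 * lam) \<le> p * (1 - q)" using c3' rho0 by (simp add: algebra_simps)
    then have "4 * lam \<le> 1 - q" using p0 by (simp add: mult_le_cancel_left_pos)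
    then show ?thesis by simp
  qed
  have r16: "r \<le> 1 / 16"
  proof -
    have "0 \<le> 4 * p * lam" using lam0 p0 by simp
    then have "4 * rho \<le> p * (1 - q)" using c3' by linarith
    moreover have "rho = ((1 + q) * (4 + p) * r) * (1 - q)" unfolding rho_def q(3) by (simp add: algebra_simps power2_eq_square)
    ultimately have "(4 * ((1 + q) * (4 + p) * r)) * (1 - q) \<le> p * (1 - q)" by (simp add: algebra_simps)
    then have a: "4 * ((1 + q) * (4 + p) * r) \<le> p" using q by (simp add: mult_le_cancel_right_pos)
    have "4 \<le> (1 + q) * (4 + p)" using q p0 by (simp add: algebra_simps)
    then have "4 * r \<le> ((1 + q) * (4 + p)) * r" using r by (rule mult_right_mono)
    then show ?thesis using a p1 by linarith
  qed
  have Lp1: "Lp \<le> (1 - p) / 4"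
  proof -
    have "q * q \<le> q * 1" using q by (intro mult_left_mono) auto
    then have "1 - q \<le> 1 - p" using q(3) by (simp add: power2_eq_square)
    then have "(1 - q) / 4 \<le> (1 - p) / 4" by simp
    then show ?thesis using Lp(2) by (rule order_trans[rotated])
  qed
  have h5: "3 / 4 * (A - p * W)^2 \<le> (1 - p - Lp) * V^2"
  proof -
    have "(1 - p) * (1 - p) \<le> (1 - p) * 1" using p0 p1 by (intro mult_left_mono) auto
    then have "(1 - p)^2 * V^2 \<le> (1 - p) * V^2" by (intro mult_right_mono) (auto simp: power2_eq_square)
    moreover have "3 / 4 * ((1 - p) * V^2) \<le> (1 - p - Lp) * V^2"
    proof -
      have "3 / 4 * (1 - p) \<le> 1 - p - Lp" using Lp1 by (simp add: field_simps)
      then have "(3 / 4 * (1 - p)) * V^2 \<le> (1 - p - Lp) * V^2" by (rule mult_right_mono) simp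
      then show ?thesis by (metis mult.assoc)
    qed
    ultimately show ?thesis using V by linarith
  qed
  have gsq: "g^2 \<le> p / 4"
  proof -
    have "g^2 \<le> (q/2)^2" using g by (intro power_mono) auto
    then show ?thesis using q(3) by (simp add: power_divide)
  qed
  have h6: "gb / 2 + g^2 \<le> 3 * p / 4" using gsq gb by linarith
  have h6b: "r * (3 / 2 * g^2) \<le> 3 * r * p / 8"
  proof -
    have "r * g^2 \<le> r * (p / 4)" using gsq r by (rule mult_left_mono)
    then show ?thesis by (simp add: algebra_simps)
  qed
  have h7: "2 * (1 + r) * g * Lc * A * W \<le> lam * q * A * W"
  proof -
    have "((1 + r) * Lc) * (2 * g) \<le> lam * q" using lamLc g Lc r lam0
      by (intro mult_mono) auto
    moreover have "0 \<le> A * W" using nn by simp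
    ultimately have "(((1 + r) * Lc) * (2 * g)) * (A * W) \<le> (lam * q) * (A * W)" by (rule mult_right_mono)
    then show ?thesis by (simp add: algebra_simps)
  qed
  have h8: "lam * A^2 \<le> 2 * lam * (A - p * W)^2 + 2 * lam * p^2 * W^2"
  proof -
    have "0 \<le> (A - 2 * p * W)^2" by simp
    then have "A^2 \<le> 2 * (A - p * W)^2 + 2 * p^2 * W^2" by (simp add: power2_eq_square algebra_simps)
    then have "lam * A^2 \<le> lam * (2 * (A - p * W)^2 + 2 * p^2 * W^2)" using lam0 by (rule mult_left_mono)
    then show ?thesis by (simp add: algebra_simps)
  qed
  have h9: "lam * q * A * W \<le> lam / 2 * (A - p * W)^2 + lam * p / 2 * W^2 + lam * p * q * W^2"
  proof -
    have e: "q * A * W = q * (A - p * W) * W + p * q * W^2" by (simp add: power2_eq_square algebra_simps)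
    define Z where "Z = A - p * W"
    have "0 \<le> (Z - q * W)^2" by simp
    also have "(Z - q * W)^2 = Z^2 - 2 * (q * Z * W) + q^2 * W^2" by (simp add: power2_eq_square algebra_simps)
    finally have "q * Z * W \<le> Z^2 / 2 + q^2 / 2 * W^2" by simp
    then have "q * (A - p * W) * W \<le> (A - p * W)^2 / 2 + p / 2 * W^2"
      unfolding Z_def using q(3) by simp
    then have "q * A * W \<le> (A - p * W)^2 / 2 + p / 2 * W^2 + p * q * W^2" using e by linarith
    then have "lam * (q * A * W) \<le> lam * ((A - p * W)^2 / 2 + p / 2 * W^2 + p * q * W^2)" using lam0 by (rule mult_left_mono)
    then show ?thesis by (simp add: algebra_simps)
  qed
  have h11: "lam * (2 * p^2 + p / 2 + p * q) \<le> p / 4 - 3 * r * p / 8 - 3 / 2 * r * (1 - p)"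
  proof -
    define T where "T = p * (lam * (2 * q^2 + q + 1 / 8))"
    define U where "U = p * ((1 - q) * (2 * q^2 + q + 1 / 2) / 4)"
    define P1 where "P1 = p * (1 - q)"
    define PL where "PL = p * lam"
    define RP where "RP = r * p"
    define R1 where "R1 = r * (1 - p)"
    have a1: "3 / 2 * R1 \<le> 3 * rho / 8"
    proof -
      have "R1 * 4 \<le> R1 * (4 + p)" unfolding R1_def using r p0 p1
        by (intro mult_left_mono) auto
      moreover have "rho = R1 * (4 + p)" unfolding rho_def R1_def by (simp add: mult.assoc)
      ultimately show ?thesis by linarith
    qed
    have a2: "RP \<le> p / 16" unfolding RP_def using r16 p0 by (simp add: mult_right_mono)
    have a3: "(1 - q) * (2 * q^2 + q + 1 / 2) \<le> 3 / 4"
    proof -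
      have "0 \<le> (q - 1/2)^2 * (2 * q + 1)" using q by simp
      moreover have "3 / 4 - (1 - q) * (2 * q^2 + q + 1 / 2) = (q - 1/2)^2 * (2 * q + 1)"
        by (simp add: power2_eq_square field_simps)
      ultimately show ?thesis by linarith
    qed
    have a4: "lam * (2 * q^2 + q + 1 / 8) \<le> (1 - q) / 4 * (2 * q^2 + q + 1 / 8)"
      using lam_le q by (intro mult_right_mono) auto
    have a5: "4 * rho + 4 * PL \<le> P1" using c3' unfolding PL_def P1_def by (simp add: algebra_simps)
    have a6: "T + 3 / 32 * P1 \<le> U"
    proof -
      have "p * (lam * (2 * q^2 + q + 1 / 8)) \<le> p * ((1 - q) / 4 * (2 * q^2 + q + 1 / 8))"
        using a4 p0 by (intro mult_left_mono) auto
      moreover have "p * ((1 - q) / 4 * (2 * q^2 + q + 1 / 8)) + 3 / 32 * (p * (1 - q)) = p * ((1 - q) * (2 * q^2 + q + 1 / 2) / 4)"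
        by (simp add: field_simps)
      ultimately show ?thesis unfolding T_def U_def P1_def by linarith
    qed
    have a7: "U \<le> p * (3 / 16)" unfolding U_def using a3 p0 by (intro mult_left_mono) auto
    have e: "lam * (2 * p^2 + p / 2 + p * q) = T + 3 / 8 * PL + 2 * PL * p - 2 * PL * p + 0"
      unfolding T_def PL_def using q(3) by (simp add: algebra_simps power2_eq_square)
    have e2: "p / 4 - 3 * r * p / 8 - 3 / 2 * r * (1 - p) = p / 4 - 3 / 8 * RP - 3 / 2 * R1"
      unfolding RP_def R1_def by (simp add: algebra_simps)
    have fin: "T + 3 / 8 * PL \<le> p / 4 - 3 / 8 * RP - 3 / 2 * R1"
      using a1 a2 a5 a6 a7 rho0 p0 by linarith
    show ?thesis using e e2 fin by linarith
  qed
  have final: "0 \<le> (3 / 4 - 2 * lam - lam / 2) * (A - p * W)^2 + (p / 4 - 3 * r * p / 8 - 3 / 2 * r * (1 - p) - lam * (2 * p^2 + p / 2 + p * q)) * W^2"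
  proof -
    have "lam \<le> 1 / 4" using lam_le q by simp
    then have "0 \<le> 3 / 4 - 2 * lam - lam / 2" by simp
    moreover have "0 \<le> p / 4 - 3 * r * p / 8 - 3 / 2 * r * (1 - p) - lam * (2 * p^2 + p / 2 + p * q)" using h11 by simp
    ultimately show ?thesis by (intro add_nonneg_nonneg mult_nonneg_nonneg) auto
  qed
  have Yb0: "r * ((6 - 3 * p) + Lc / eps) \<le> 2 * gm"
  proof -
    have rl: "0 \<le> r * Lc / eps" using r Lc eps by simp
    have rp: "0 \<le> r * p" using r p0 by simp
    have "r * ((6 - 3 * p) + Lc / eps) = 6 * r - 3 * (r * p) + r * Lc / eps" by (simp add: algebra_simps)
    moreover have "r * (6 - 2 * p) + 2 * r * Lc / eps = 6 * r - 2 * (r * p) + 2 * (r * Lc / eps)" by (simp add: algebra_simps)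
    ultimately show ?thesis using rl rp gm by linarith
  qed
  define K where "K = Lc / eps"
  have K0: "0 \<le> K" unfolding K_def using Lc eps by simp
  have h2': "2 * Lc * A * Y \<le> Lc * eps * A^2 + K * Y^2"
    using h2 eps unfolding K_def by (simp add: algebra_simps)
  have d1: "0 \<le> 2 * Y^2 + g^2 * W^2 / 2 - 2 * g * W * Y" using h1 by linarith
  have d2: "0 \<le> Lc * eps * A^2 + K * Y^2 - 2 * Lc * A * Y" using h2' by linarith
  have d3: "0 \<le> 3 * Y^2 + 3 / 2 * W^2 - (Y + W)^2" using h3 by linarith
  have d4: "0 \<le> 2 * gm - r * (6 - 3 * p) - r * K"
  proof -
    have "r * ((6 - 3 * p) + Lc / eps) = r * (6 - 3 * p) + r * K" unfolding K_def by (simp add: algebra_simps)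
    then show ?thesis using Yb0 by linarith
  qed
  have d5: "0 \<le> (1 - p - Lp) * V^2 - 3 / 4 * (A - p * W)^2" using h5 by linarith
  have d6: "0 \<le> 3 * p / 4 - gb / 2 - g^2" using h6 by linarith
  have d7: "0 \<le> p / 4 - g^2" using gsq by linarith
  have d8: "0 \<le> lam * q * A * W - 2 * (1 + r) * g * Lc * A * W" using h7 by linarith
  have d9: "0 \<le> 2 * lam * (A - p * W)^2 + 2 * lam * p^2 * W^2 - lam * A^2" using h8 by linarith
  have d10: "0 \<le> lam / 2 * (A - p * W)^2 + lam * p / 2 * W^2 + lam * p * q * W^2 - lam * q * A * W" using h9 by linarith
  have ident: "2 * gm * Y^2 + (1 - p - Lp) * V^2 + p * W^2 - Lc * A^2 - (gb / 2 + g^2) * W^2 - 2 * g * Lc * A * W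
     - r * (Y^2 + 2 * g * W * Y + g^2 * W^2 + 2 * Lc * A * Y + 2 * g * Lc * A * W + (1 - p) * (Y + W)^2 + Lc * A^2)
     = r * (2 * Y^2 + g^2 * W^2 / 2 - 2 * g * W * Y) + r * (Lc * eps * A^2 + K * Y^2 - 2 * Lc * A * Y)
       + r * (1 - p) * (3 * Y^2 + 3 / 2 * W^2 - (Y + W)^2) + (2 * gm - r * (6 - 3 * p) - r * K) * Y^2
       + ((1 - p - Lp) * V^2 - 3 / 4 * (A - p * W)^2) + (3 * p / 4 - gb / 2 - g^2) * W^2
       + 3 / 2 * r * (p / 4 - g^2) * W^2 + (lam * q * A * W - 2 * (1 + r) * g * Lc * A * W)
       + (2 * lam * (A - p * W)^2 + 2 * lam * p^2 * W^2 - lam * A^2)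
       + (lam / 2 * (A - p * W)^2 + lam * p / 2 * W^2 + lam * p * q * W^2 - lam * q * A * W)
       + ((3 / 4 - 2 * lam - lam / 2) * (A - p * W)^2 + (p / 4 - 3 * r * p / 8 - 3 / 2 * r * (1 - p) - lam * (2 * p^2 + p / 2 + p * q)) * W^2)"
    unfolding lam_def by (simp add: algebra_simps)
  have n1: "0 \<le> r * (2 * Y^2 + g^2 * W^2 / 2 - 2 * g * W * Y)" using r d1 by (rule mult_nonneg_nonneg)
  have n2: "0 \<le> r * (Lc * eps * A^2 + K * Y^2 - 2 * Lc * A * Y)" using r d2 by (rule mult_nonneg_nonneg)
  have n3: "0 \<le> r * (1 - p) * (3 * Y^2 + 3 / 2 * W^2 - (Y + W)^2)" using r p1 d3 by simp
  have n4: "0 \<le> (2 * gm - r * (6 - 3 * p) - r * K) * Y^2" using d4 by simp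
  have n6: "0 \<le> (3 * p / 4 - gb / 2 - g^2) * W^2" using d6 by simp
  have n7: "0 \<le> 3 / 2 * r * (p / 4 - g^2) * W^2" using d7 r by simp
  have "0 \<le> r * (2 * Y^2 + g^2 * W^2 / 2 - 2 * g * W * Y) + r * (Lc * eps * A^2 + K * Y^2 - 2 * Lc * A * Y)
       + r * (1 - p) * (3 * Y^2 + 3 / 2 * W^2 - (Y + W)^2) + (2 * gm - r * (6 - 3 * p) - r * K) * Y^2
       + ((1 - p - Lp) * V^2 - 3 / 4 * (A - p * W)^2) + (3 * p / 4 - gb / 2 - g^2) * W^2
       + 3 / 2 * r * (p / 4 - g^2) * W^2 + (lam * q * A * W - 2 * (1 + r) * g * Lc * A * W)
       + (2 * lam * (A - p * W)^2 + 2 * lam * p^2 * W^2 - lam * A^2)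
       + (lam / 2 * (A - p * W)^2 + lam * p / 2 * W^2 + lam * p * q * W^2 - lam * q * A * W)
       + ((3 / 4 - 2 * lam - lam / 2) * (A - p * W)^2 + (p / 4 - 3 * r * p / 8 - 3 / 2 * r * (1 - p) - lam * (2 * p^2 + p / 2 + p * q)) * W^2)"
    using n1 n2 n3 n4 d5 n6 n7 d8 d9 d10 final by linarith
  then show ?thesis using ident by linarith
qed



lemma jensen_sum:
  fixes q z :: "'i \<Rightarrow> real"
  assumes "finite I" "\<And>i. i \<in> I \<Longrightarrow> 0 \<le> q i" "(\<Sum>i\<in>I. q i) = 1"
    and "\<And>i. i \<in> I \<Longrightarrow> 0 \<le> z i" and "(\<Sum>i\<in>I. q i * (z i)\<^sup>2) \<le> c\<^sup>2" and "0 \<le> c"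
  shows "(\<Sum>i\<in>I. q i * z i) \<le> c"
proof -
  have "(\<Sum>i\<in>I. sqrt (q i) * (sqrt (q i) * z i))\<^sup>2 \<le> (\<Sum>i\<in>I. (sqrt (q i))\<^sup>2) * (\<Sum>i\<in>I. (sqrt (q i) * z i)\<^sup>2)"
    by (rule Cauchy_Schwarz_ineq_sum)
  also have "(\<Sum>i\<in>I. sqrt (q i) * (sqrt (q i) * z i)) = (\<Sum>i\<in>I. q i * z i)"
    using assms(2) by (intro sum.cong) (auto simp: mult.assoc[symmetric])
  also have "(\<Sum>i\<in>I. (sqrt (q i))\<^sup>2) = 1" using assms(2,3) by simp
  also have "(\<Sum>i\<in>I. (sqrt (q i) * z i)\<^sup>2) = (\<Sum>i\<in>I. q i * (z i)\<^sup>2)"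
    using assms(2) by (intro sum.cong) (auto simp: power_mult_distrib)
  finally have "(\<Sum>i\<in>I. q i * z i)\<^sup>2 \<le> c\<^sup>2" using assms(5) by simp
  moreover have "0 \<le> (\<Sum>i\<in>I. q i * z i)" using assms(2,4) by (intro sum_nonneg) auto
  ultimately show ?thesis using assms(6) by (meson power2_le_imp_le)
qed

context spos
begin

lemma Ssq_convex: "inner (S ((1 - t) *\<^sub>R a + t *\<^sub>R b)) ((1 - t) *\<^sub>R a + t *\<^sub>R b)
   = (1 - t) * inner (S a) a + t * inner (S b) b - t * (1 - t) * inner (S (a - b)) (a - b)"
proof -
  have e1: "inner (S ((1 - t) *\<^sub>R a + t *\<^sub>R b)) ((1 - t) *\<^sub>R a + t *\<^sub>R b)
     = (1 - t)^2 * inner (S a) a + 2 * ((1 - t) * t * inner (S a) b) + t^2 * inner (S b) b"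
    unfolding Ssq_expand Ssq_scale by (simp add: S_scale)
  show ?thesis unfolding e1 Ssq_expand_diff by (simp add: power2_eq_square algebra_simps)
qed

lemma inner_invS: "inner (S a) (inv S g) = inner a g"
  by (simp add: S_sym)

lemma nS_sym: "norm_S S (a - b) = norm_S S (b - a)"
proof -
  have "norm_S S (b - a) = norm_S S ((-1) *\<^sub>R (a - b))" by simp
  also have "\<dots> = \<bar>-1\<bar> * norm_S S (a - b)" by (rule nS_scale)
  finally show ?thesis by simp
qed

lemma nS_triangle_diff: "norm_S S (a - c) \<le> norm_S S (a - b) + norm_S S (b - c)"
  using nS_triangle[of "a - b" "b - c"] by simp

end



lemma assemble:
  fixes IS IU' IU IUx IUyx IB IC IG Xb2 X Y A Om V W B2 U p Lp Lc g gam mu beta :: real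
  assumes F5: "0 \<le> IS - IU' + IU - gam * IB - gam * IC"
    and F6: "2 * IS = Xb2 - Y^2 - A^2"
    and F7: "Xb2 = (1 - p) * X^2 + p * Om^2 - p * (1 - p) * B2"
    and F8: "A^2 + p * (1 - p) * B2 = (1 - p) * V^2 + p * W^2"
    and F9: "gam * mu * Y^2 \<le> gam * IG + gam * IB"
    and F10: "- (gam * IC) \<le> gam * beta / 4 * W^2"
    and F11: "IU = IUx + IUyx" "IUyx \<le> Lp * U * V" "0 \<le> Lp"
  shows "Y^2 - 2 * gam * IG + g^2 * W^2 + 2 * IU' + 2 * g * Lc * A * W + (1 - p) * Om^2 + Lc * A^2
    \<le> (1 - p) * X^2 + Om^2 + 2 * IUx + Lp * U^2
       - (2 * (gam * mu) * Y^2 + (1 - p - Lp) * V^2 + p * W^2 - Lc * A^2 - (gam * beta / 2 + g^2) * W^2 - 2 * g * Lc * A * W)"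
proof -
  define s5 where "s5 = IS - IU' + IU - gam * IB - gam * IC"
  define s9 where "s9 = gam * IG + gam * IB - gam * mu * Y^2"
  define s10 where "s10 = gam * beta / 4 * W^2 + gam * IC"
  define s11a where "s11a = Lp * U^2 + Lp * V^2 - 2 * (Lp * U * V)"
  define s11b where "s11b = Lp * U * V - IUyx"
  define e6 where "e6 = 2 * IS - Xb2 + Y^2 + A^2"
  define e7 where "e7 = Xb2 - (1 - p) * X^2 - p * Om^2 + p * (1 - p) * B2"
  define e8 where "e8 = A^2 + p * (1 - p) * B2 - (1 - p) * V^2 - p * W^2"
  define e11 where "e11 = IU - IUx - IUyx"
  have id: "((1 - p) * X^2 + Om^2 + 2 * IUx + Lp * U^2
       - (2 * (gam * mu) * Y^2 + (1 - p - Lp) * V^2 + p * W^2 - Lc * A^2 - (gam * beta / 2 + g^2) * W^2 - 2 * g * Lc * A * W))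
     - (Y^2 - 2 * gam * IG + g^2 * W^2 + 2 * IU' + 2 * g * Lc * A * W + (1 - p) * Om^2 + Lc * A^2)
     = 2 * s5 + 2 * s9 + 2 * s10 + s11a + 2 * s11b - e6 - e7 + e8 - 2 * e11"
    unfolding s5_def s9_def s10_def s11a_def s11b_def e6_def e7_def e8_def e11_def
    by (simp add: algebra_simps)
  have "0 \<le> s5" using F5 unfolding s5_def .
  moreover have "0 \<le> s9" using F9 unfolding s9_def by linarith
  moreover have "0 \<le> s10" using F10 unfolding s10_def by linarith
  moreover have "0 \<le> s11a"
  proof -
    have "0 \<le> Lp * (U - V)^2" using F11(3) by simp
    then show ?thesis unfolding s11a_def by (simp add: power2_eq_square algebra_simps)
  qed
  moreover have "0 \<le> s11b" using F11(2) unfolding s11b_def by linarith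
  moreover have "e6 = 0" "e7 = 0" "e8 = 0" "e11 = 0"
    unfolding e6_def e7_def e8_def e11_def using F6 F7 F8 F11(1) by linarith+
  ultimately show ?thesis using id by linarith
qed

context spos
begin

lemma one_step:
  fixes A :: "'a \<Rightarrow> 'a set" and B C M :: "'a \<Rightarrow> 'a" and Bxi :: "nat \<Rightarrow> 'a \<Rightarrow> 'a" and Q :: "nat pmf"
    and xn :: "nat \<Rightarrow> 'a"
  assumes Amono: "monotone_setop A"
    and xs: "- (B xstar + C xstar) \<in> A xstar"
    and incl: "(M xb - (B om + C om) + (1 / gam) *\<^sub>R u) - M y \<in> A y"
    and xb: "xb = (1 - p) *\<^sub>R x + p *\<^sub>R om"
    and u': "u' = (gam *\<^sub>R M y - S y) - (gam *\<^sub>R M xb - S xb)"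
    and Lip: "lipschitz_wrt S Lc (\<lambda>v. gam *\<^sub>R M v - S v)"
    and ub: "norm_S (inv S) u \<le> Lp * U" "0 \<le> U"
    and finQ: "finite (set_pmf Q)"
    and unb: "B y - B om = (\<Sum>i\<in>set_pmf Q. pmf Q i *\<^sub>R (Bxi i y - Bxi i om))"
    and var: "(\<Sum>i\<in>set_pmf Q. pmf Q i * (norm_S (inv S) (Bxi i y - Bxi i om))\<^sup>2) \<le> theta\<^sup>2 * (norm_S S (y - om))\<^sup>2"
    and xn: "\<And>i. xn i = y - gam *\<^sub>R inv S (Bxi i y) + gam *\<^sub>R inv S (Bxi i om)"
    and coc: "cocoercive_wrt S beta C" and smon: "strongly_monotone_wrt S mu B"
    and q: "0 < q" "q < 1" "p = q^2"
    and r: "0 \<le> r" and Lc: "0 \<le> Lc" and Lp: "0 \<le> Lp" "Lp \<le> (1 - q) / 4" and eps: "eps > 0"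
    and gam: "gam > 0" and theta: "theta \<ge> 0" and beta: "beta > 0"
    and g: "gam * theta \<le> q / 2" and gb: "gam * beta \<le> p"
    and gm: "r * (6 - 2 * p) + 2 * r * Lc / eps \<le> 2 * (gam * mu)"
    and c3: "4 * r * ((1 - p) * (4 + p) + p * Lc * (eps + 1)) + 4 * p * Lc \<le> p * (1 - q)"
  shows "(1 + r) * ((\<Sum>i\<in>set_pmf Q. pmf Q i * ((norm_S S (xn i - xstar))\<^sup>2 + 2 * inner u' (xn i - xstar)))
            + (1 - p) * (norm_S S (om - xstar))\<^sup>2 + Lc * (norm_S S (y - xb))\<^sup>2)
     \<le> (1 - p) * (norm_S S (x - xstar))\<^sup>2 + (norm_S S (om - xstar))\<^sup>2 + 2 * inner u (x - xstar) + Lp * U\<^sup>2"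
proof -
  define I where "I = set_pmf Q"
  define qi where "qi = pmf Q"
  define gi where "gi i = Bxi i y - Bxi i om" for i
  define nY where "nY = norm_S S (y - xstar)"
  define nA where "nA = norm_S S (y - xb)"
  define nW where "nW = norm_S S (y - om)"
  define nV where "nV = norm_S S (y - x)"
  define nX where "nX = norm_S S (x - xstar)"
  define nO where "nO = norm_S S (om - xstar)"
  define g where "g = gam * theta"
  have finI: "finite I" unfolding I_def using finQ .
  have q0: "\<And>i. 0 \<le> qi i" unfolding qi_def by simp
  have q1: "(\<Sum>i\<in>I. qi i) = 1" unfolding qi_def I_def using finQ by (simp add: sum_pmf_eq_1)
  have p0: "0 < p" using q by simp
  have p1: "p < 1" using q by (simp add: power_less_one_iff)
  have nn: "0 \<le> nY" "0 \<le> nA" "0 \<le> nW" "0 \<le> nV" "0 \<le> nX" "0 \<le> nO"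
    unfolding nY_def nA_def nW_def nV_def nX_def nO_def by (auto intro: nS_nonneg)
  have xn_eq: "xn i - xstar = (y - xstar) - gam *\<^sub>R inv S (gi i)" for i
    unfolding xn gi_def by (simp add: invS_diff algebra_simps)
  have T: "(norm_S S (xn i - xstar))\<^sup>2 = nY\<^sup>2 - 2 * (gam * inner (gi i) (y - xstar)) + gam\<^sup>2 * (norm_S (inv S) (gi i))\<^sup>2" for i
  proof -
    have "(norm_S S (xn i - xstar))\<^sup>2 = inner (S ((y - xstar) - gam *\<^sub>R inv S (gi i))) ((y - xstar) - gam *\<^sub>R inv S (gi i))"
      unfolding xn_eq nS_sq ..
    also have "\<dots> = nY\<^sup>2 - 2 * inner (S (y - xstar)) (gam *\<^sub>R inv S (gi i)) + gam\<^sup>2 * inner (S (inv S (gi i))) (inv S (gi i))"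
      unfolding Ssq_expand_diff Ssq_scale nY_def nS_sq ..
    also have "inner (S (y - xstar)) (gam *\<^sub>R inv S (gi i)) = gam * inner (gi i) (y - xstar)"
      by (simp add: inner_invS inner_commute)
    also have "inner (S (inv S (gi i))) (inv S (gi i)) = (norm_S (inv S) (gi i))\<^sup>2"
      by (simp add: nSi_eq nS_sq)
    finally show ?thesis .
  qed
  have Iu: "inner u' (xn i - xstar) = inner u' (y - xstar) - gam * inner u' (inv S (gi i))" for i
    unfolding xn_eq by (simp add: inner_diff_right)
  define IG where "IG = inner (B y - B om) (y - xstar)"
  define SQ where "SQ = (\<Sum>i\<in>I. qi i * (norm_S (inv S) (gi i))\<^sup>2)"
  define SUI where "SUI = (\<Sum>i\<in>I. qi i * inner u' (inv S (gi i)))"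
  define Z where "Z = (\<Sum>i\<in>I. qi i * norm_S (inv S) (gi i))"
  define IU' where "IU' = inner u' (y - xstar)"
  have IG_sum: "IG = (\<Sum>i\<in>I. qi i * inner (gi i) (y - xstar))"
    unfolding IG_def unb I_def qi_def gi_def by (simp add: inner_sum_left)
  have sumeq: "(\<Sum>i\<in>I. qi i * ((norm_S S (xn i - xstar))\<^sup>2 + 2 * inner u' (xn i - xstar)))
      = nY\<^sup>2 - 2 * (gam * IG) + gam\<^sup>2 * SQ + 2 * IU' - 2 * (gam * SUI)"
  proof -
    have "(\<Sum>i\<in>I. qi i * ((norm_S S (xn i - xstar))\<^sup>2 + 2 * inner u' (xn i - xstar)))
      = (\<Sum>i\<in>I. qi i * nY\<^sup>2 - 2 * gam * (qi i * inner (gi i) (y - xstar)) + gam\<^sup>2 * (qi i * (norm_S (inv S) (gi i))\<^sup>2)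
           + 2 * (qi i * IU') - 2 * gam * (qi i * inner u' (inv S (gi i))))"
      unfolding T Iu IU'_def by (intro sum.cong) (auto simp: algebra_simps)
    also have "\<dots> = (\<Sum>i\<in>I. qi i) * nY\<^sup>2 - 2 * gam * IG + gam\<^sup>2 * SQ + 2 * ((\<Sum>i\<in>I. qi i) * IU') - 2 * gam * SUI"
      unfolding IG_sum SQ_def SUI_def
      by (simp add: sum.distrib sum_subtractf sum_distrib_left sum_distrib_right)
    finally show ?thesis using q1 by simp
  qed
  have nu': "norm_S (inv S) u' \<le> Lc * nA"
    using Lip unfolding lipschitz_wrt_def nA_def u' by blast
  have SQb: "SQ \<le> theta\<^sup>2 * nW\<^sup>2" using var unfolding SQ_def I_def qi_def gi_def nW_def .
  have Zb: "Z \<le> theta * nW"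
    unfolding Z_def
  proof (rule jensen_sum[OF finI q0 q1])
    show "0 \<le> norm_S (inv S) (gi i)" for i by (rule nSi_nonneg)
    show "(\<Sum>i\<in>I. qi i * (norm_S (inv S) (gi i))\<^sup>2) \<le> (theta * nW)\<^sup>2"
      using SQb unfolding SQ_def by (simp add: power_mult_distrib)
    show "0 \<le> theta * nW" using theta nn by simp
  qed
  have Z0: "0 \<le> Z" unfolding Z_def using q0 by (intro sum_nonneg mult_nonneg_nonneg nSi_nonneg) auto
  have SUIb: "- SUI \<le> norm_S (inv S) u' * Z"
  proof -
    have "- SUI = (\<Sum>i\<in>I. qi i * (- inner u' (inv S (gi i))))" unfolding SUI_def by (simp add: sum_negf)
    also have "\<dots> \<le> (\<Sum>i\<in>I. qi i * (norm_S (inv S) u' * norm_S (inv S) (gi i)))"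
      using CSii q0 by (intro sum_mono mult_left_mono) (auto simp: abs_le_iff)
    also have "\<dots> = norm_S (inv S) u' * Z" unfolding Z_def by (simp add: sum_distrib_left algebra_simps)
    finally show ?thesis .
  qed
  have IGb: "- IG \<le> Z * nY"
  proof -
    have "- IG = (\<Sum>i\<in>I. qi i * (- inner (gi i) (y - xstar)))" unfolding IG_sum by (simp add: sum_negf)
    also have "\<dots> \<le> (\<Sum>i\<in>I. qi i * (norm_S (inv S) (gi i) * nY))"
      unfolding nY_def using CSi q0 by (intro sum_mono mult_left_mono) (auto simp: abs_le_iff)
    also have "\<dots> = Z * nY" unfolding Z_def by (simp add: sum_distrib_left sum_distrib_right algebra_simps)
    finally show ?thesis .
  qed
  have IU'b: "IU' \<le> Lc * nA * nY"
  proof -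
    have "IU' \<le> norm_S (inv S) u' * nY" unfolding IU'_def nY_def by (rule CSi_le)
    also have "\<dots> \<le> Lc * nA * nY" using nu' nn by (intro mult_right_mono) auto
    finally show ?thesis .
  qed
  have B1: "gam\<^sup>2 * SQ \<le> g\<^sup>2 * nW\<^sup>2"
  proof -
    have "gam\<^sup>2 * SQ \<le> gam\<^sup>2 * (theta\<^sup>2 * nW\<^sup>2)" using SQb by (intro mult_left_mono) auto
    then show ?thesis unfolding g_def by (simp add: power_mult_distrib)
  qed
  have B2: "- (gam * SUI) \<le> g * Lc * nA * nW"
  proof -
    have "norm_S (inv S) u' * Z \<le> (Lc * nA) * (theta * nW)"
      using nu' Zb Z0 nn Lc by (intro mult_mono) auto
    then have "- SUI \<le> (Lc * nA) * (theta * nW)" using SUIb by linarith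
    then have "gam * (- SUI) \<le> gam * ((Lc * nA) * (theta * nW))" using gam by (intro mult_left_mono) auto
    then show ?thesis unfolding g_def by (simp add: algebra_simps)
  qed
  have B3: "- (gam * IG) \<le> g * nW * nY"
  proof -
    have "Z * nY \<le> (theta * nW) * nY" using Zb nn by (intro mult_right_mono) auto
    then have "- IG \<le> (theta * nW) * nY" using IGb by linarith
    then have "gam * (- IG) \<le> gam * ((theta * nW) * nY)" using gam by (intro mult_left_mono) auto
    then show ?thesis unfolding g_def by (simp add: algebra_simps)
  qed
  define IS where "IS = inner (S (xb - y)) (y - xstar)"
  define IU where "IU = inner u (y - xstar)"
  define IB where "IB = inner (B om - B xstar) (y - xstar)"
  define IC where "IC = inner (C om - C xstar) (y - xstar)"
  define IUx where "IUx = inner u (x - xstar)"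
  define IUyx where "IUyx = inner u (y - x)"
  define Xb2 where "Xb2 = (norm_S S (xb - xstar))\<^sup>2"
  define B2 where "B2 = inner (S (x - om)) (x - om)"
  have F5: "0 \<le> IS - IU' + IU - gam * IB - gam * IC"
  proof -
    define vy where "vy = (M xb - (B om + C om) + (1 / gam) *\<^sub>R u) - M y"
    have "0 \<le> inner (vy - (- (B xstar + C xstar))) (y - xstar)"
      using Amono incl xs unfolding monotone_setop_def vy_def by blast
    then have "0 \<le> gam * inner (vy - (- (B xstar + C xstar))) (y - xstar)" using gam by simp
    also have "gam * inner (vy - (- (B xstar + C xstar))) (y - xstar)
       = inner (gam *\<^sub>R (vy - (- (B xstar + C xstar)))) (y - xstar)" by simp
    also have "gam *\<^sub>R (vy - (- (B xstar + C xstar)))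
       = S (xb - y) - u' + u - gam *\<^sub>R (B om - B xstar) - gam *\<^sub>R (C om - C xstar)"
      unfolding vy_def u' using gam by (simp add: S_diff algebra_simps)
    finally show ?thesis unfolding IS_def IU'_def IU_def IB_def IC_def
      by (simp add: inner_diff_left inner_add_left)
  qed
  have F6: "2 * IS = Xb2 - nY\<^sup>2 - nA\<^sup>2"
  proof -
    have "Xb2 = inner (S ((xb - y) + (y - xstar))) ((xb - y) + (y - xstar))" unfolding Xb2_def nS_sq by simp
    also have "\<dots> = inner (S (xb - y)) (xb - y) + 2 * IS + nY\<^sup>2" unfolding Ssq_expand IS_def nY_def nS_sq ..
    also have "inner (S (xb - y)) (xb - y) = nA\<^sup>2" unfolding nA_def nS_sym[of y xb] nS_sq ..
    finally show ?thesis by simp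
  qed
  have F7: "Xb2 = (1 - p) * nX\<^sup>2 + p * nO\<^sup>2 - p * (1 - p) * B2"
  proof -
    have "xb - xstar = (1 - p) *\<^sub>R (x - xstar) + p *\<^sub>R (om - xstar)" unfolding xb by (simp add: algebra_simps)
    then have "Xb2 = inner (S ((1 - p) *\<^sub>R (x - xstar) + p *\<^sub>R (om - xstar))) ((1 - p) *\<^sub>R (x - xstar) + p *\<^sub>R (om - xstar))"
      unfolding Xb2_def nS_sq by simp
    also have "\<dots> = (1 - p) * nX\<^sup>2 + p * nO\<^sup>2 - p * (1 - p) * B2"
      unfolding Ssq_convex nX_def nO_def nS_sq B2_def by simp
    finally show ?thesis .
  qed
  have F8: "nA\<^sup>2 + p * (1 - p) * B2 = (1 - p) * nV\<^sup>2 + p * nW\<^sup>2"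
  proof -
    have "y - xb = (1 - p) *\<^sub>R (y - x) + p *\<^sub>R (y - om)" unfolding xb by (simp add: algebra_simps)
    then have "nA\<^sup>2 = inner (S ((1 - p) *\<^sub>R (y - x) + p *\<^sub>R (y - om))) ((1 - p) *\<^sub>R (y - x) + p *\<^sub>R (y - om))"
      unfolding nA_def nS_sq by simp
    also have "\<dots> = (1 - p) * nV\<^sup>2 + p * nW\<^sup>2 - p * (1 - p) * inner (S ((y - x) - (y - om))) ((y - x) - (y - om))"
      unfolding Ssq_convex nV_def nW_def nS_sq ..
    also have "inner (S ((y - x) - (y - om))) ((y - x) - (y - om)) = B2"
      unfolding B2_def nS_sq[symmetric] using nS_sym[of om x] by simp
    finally show ?thesis by simp
  qed
  have F9: "gam * mu * nY\<^sup>2 \<le> gam * IG + gam * IB"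
  proof -
    have "mu * nY\<^sup>2 \<le> inner (B y - B xstar) (y - xstar)" using smon unfolding strongly_monotone_wrt_def nY_def by blast
    also have "inner (B y - B xstar) (y - xstar) = IG + IB" unfolding IG_def IB_def by (simp add: inner_diff_left)
    finally have "gam * (mu * nY\<^sup>2) \<le> gam * (IG + IB)" using gam by (intro mult_left_mono) auto
    then show ?thesis by (simp add: algebra_simps)
  qed
  have F10: "- (gam * IC) \<le> gam * beta / 4 * nW\<^sup>2"
  proof -
    define nc where "nc = norm_S (inv S) (C om - C xstar)"
    have c1: "(1 / beta) * nc\<^sup>2 \<le> inner (C om - C xstar) (om - xstar)" using coc unfolding cocoercive_wrt_def nc_def by blast
    have c2: "- (nc * nW) \<le> inner (C om - C xstar) (y - om)" unfolding nc_def nW_def by (rule CSi_ge)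
    have c3': "IC = inner (C om - C xstar) (om - xstar) + inner (C om - C xstar) (y - om)"
      unfolding IC_def by (simp add: inner_diff_right)
    have c4: "nc * nW \<le> (1 / beta) * nc\<^sup>2 + beta / 4 * nW\<^sup>2"
    proof -
      have "0 \<le> (nc - beta / 2 * nW)\<^sup>2 / beta" using beta by simp
      also have "(nc - beta / 2 * nW)\<^sup>2 / beta = (1 / beta) * nc\<^sup>2 + beta / 4 * nW\<^sup>2 - nc * nW"
        using beta by (simp add: power2_eq_square field_simps)
      finally show ?thesis by simp
    qed
    have "- IC \<le> beta / 4 * nW\<^sup>2" using c1 c2 c3' c4 by linarith
    then have "gam * (- IC) \<le> gam * (beta / 4 * nW\<^sup>2)" using gam by (intro mult_left_mono) auto
    then show ?thesis by (simp add: algebra_simps)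
  qed
  have F11: "IU = IUx + IUyx" unfolding IU_def IUx_def IUyx_def by (simp add: inner_diff_right)
  have F11b: "IUyx \<le> Lp * U * nV"
  proof -
    have "IUyx \<le> norm_S (inv S) u * nV" unfolding IUyx_def nV_def by (rule CSi_le)
    also have "\<dots> \<le> Lp * U * nV" using ub nn by (intro mult_right_mono) auto
    finally show ?thesis .
  qed
  have Ob: "nO \<le> nY + nW"
  proof -
    have "nO \<le> norm_S S (om - y) + norm_S S (y - xstar)" unfolding nO_def by (rule nS_triangle_diff)
    then show ?thesis unfolding nY_def nW_def using nS_sym[of om y] by simp
  qed
  have Vb: "(nA - p * nW)\<^sup>2 \<le> (1 - p)\<^sup>2 * nV\<^sup>2"
  proof -
    have e1: "y - xb = (1 - p) *\<^sub>R (y - x) + p *\<^sub>R (y - om)" unfolding xb by (simp add: algebra_simps)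
    have "nA \<le> norm_S S ((1 - p) *\<^sub>R (y - x)) + norm_S S (p *\<^sub>R (y - om))" unfolding nA_def e1 by (rule nS_triangle)
    then have a1: "nA \<le> (1 - p) * nV + p * nW" unfolding nS_scale nV_def nW_def using p0 p1 by simp
    have e2: "p *\<^sub>R (y - om) = (y - xb) + (1 - p) *\<^sub>R (x - y)" unfolding xb by (simp add: algebra_simps)
    have "norm_S S (p *\<^sub>R (y - om)) \<le> norm_S S (y - xb) + norm_S S ((1 - p) *\<^sub>R (x - y))" unfolding e2 by (rule nS_triangle)
    then have a2: "p * nW \<le> nA + (1 - p) * nV" unfolding nS_scale nV_def nW_def nA_def using p0 p1 nS_sym[of x y] by simp
    have "\<bar>nA - p * nW\<bar> \<le> (1 - p) * nV" using a1 a2 by linarith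
    then have "\<bar>nA - p * nW\<bar>\<^sup>2 \<le> ((1 - p) * nV)\<^sup>2" by (rule power_mono) simp
    then show ?thesis by (simp add: power_mult_distrib)
  qed
  define Dv where "Dv = 2 * (gam * mu) * nY^2 + (1 - p - Lp) * nV^2 + p * nW^2 - Lc * nA^2 - (gam * beta / 2 + g^2) * nW^2 - 2 * g * Lc * nA * nW"
  define Eupv where "Eupv = nY^2 + 2 * g * nW * nY + g^2 * nW^2 + 2 * Lc * nA * nY + 2 * g * Lc * nA * nW + (1 - p) * (nY + nW)^2 + Lc * nA^2"
  define E1v where "E1v = nY^2 - 2 * gam * IG + g^2 * nW^2 + 2 * IU' + 2 * g * Lc * nA * nW + (1 - p) * nO^2 + Lc * nA^2"
  define Phiv where "Phiv = (1 - p) * nX^2 + nO^2 + 2 * IUx + Lp * U^2"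
  define LHSv where "LHSv = (\<Sum>i\<in>I. qi i * ((norm_S S (xn i - xstar))\<^sup>2 + 2 * inner u' (xn i - xstar))) + (1 - p) * nO\<^sup>2 + Lc * nA\<^sup>2"
  have A1: "E1v \<le> Phiv - Dv"
    using assemble[where g=g and Lc=Lc, OF F5 F6 F7 F8 F9 F10 F11 F11b Lp(1)]
    unfolding E1v_def Phiv_def Dv_def .
  have A2: "r * Eupv \<le> Dv"
    unfolding Eupv_def Dv_def
  proof (rule real_core[OF q r Lc Lp eps])
    show "0 \<le> g" unfolding g_def using gam theta by simp
    show "g \<le> q / 2" unfolding g_def using g .
    show "0 \<le> gam * beta" using gam beta by simp
    show "gam * beta \<le> p" using gb .
    show "r * (6 - 2 * p) + 2 * r * Lc / eps \<le> 2 * (gam * mu)" using gm .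
    show "4 * r * ((1 - p) * (4 + p) + p * Lc * (eps + 1)) + 4 * p * Lc \<le> p * (1 - q)" using c3 .
    show "0 \<le> nY" "0 \<le> nA" "0 \<le> nW" "0 \<le> nV" using nn by auto
    show "(nA - p * nW)\<^sup>2 \<le> (1 - p)\<^sup>2 * nV\<^sup>2" using Vb .
  qed
  have A3: "E1v \<le> Eupv"
  proof -
    have "nO\<^sup>2 \<le> (nY + nW)\<^sup>2" using Ob nn by (intro power_mono) auto
    then have o2: "(1 - p) * nO\<^sup>2 \<le> (1 - p) * (nY + nW)\<^sup>2" using p1 by (intro mult_left_mono) auto
    have b1: "2 * gam * IG = 2 * (gam * IG)" "2 * g * nW * nY = 2 * (g * nW * nY)" "2 * Lc * nA * nY = 2 * (Lc * nA * nY)"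
      by simp_all
    show ?thesis unfolding E1v_def Eupv_def using o2 b1 B3 IU'b by linarith
  qed
  have A4: "LHSv \<le> E1v"
  proof -
    have b1: "2 * gam * IG = 2 * (gam * IG)" "2 * g * Lc * nA * nW = 2 * (g * Lc * nA * nW)" by simp_all
    show ?thesis unfolding LHSv_def E1v_def using sumeq b1 B1 B2 by linarith
  qed
  have "r * LHSv \<le> r * E1v" using A4 r by (rule mult_left_mono)
  moreover have "r * E1v \<le> r * Eupv" using A3 r by (rule mult_left_mono)
  moreover have "(1 + r) * LHSv = LHSv + r * LHSv" by (simp add: algebra_simps)
  ultimately have "(1 + r) * LHSv \<le> Phiv" using A1 A2 A4 by linarith
  then show ?thesis unfolding LHSv_def Phiv_def I_def qi_def nO_def nA_def nX_def IUx_def .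
qed

end



lemma integral_pmf_finite_nv:
  fixes f :: "'a \<Rightarrow> 'b::{real_normed_vector, second_countable_topology}"
  assumes fin: "finite (set_pmf M)"
  shows "integral\<^sup>L (measure_pmf M) f = (\<Sum>a\<in>set_pmf M. pmf M a *\<^sub>R f a)"
proof -
  have "integral\<^sup>L (measure_pmf M) f = integral\<^sup>L (measure_pmf M) (\<lambda>x. \<Sum>a\<in>set_pmf M. indicator {a} x *\<^sub>R f a)"
  proof (rule integral_cong_AE)
    show "f \<in> borel_measurable (measure_pmf M)" by simp
    show "(\<lambda>x. \<Sum>a\<in>set_pmf M. indicator {a} x *\<^sub>R f a) \<in> borel_measurable (measure_pmf M)" by simp
    show "AE x in measure_pmf M. f x = (\<Sum>a\<in>set_pmf M. indicator {a} x *\<^sub>R f a)"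
      using AE_measure_pmf[of M]
    proof eventually_elim
      case (elim x)
      have "(\<Sum>a\<in>set_pmf M. indicator {a} x *\<^sub>R f a) = (\<Sum>a\<in>set_pmf M. if x = a then f a else 0)"
        by (intro sum.cong) (auto simp: indicator_def)
      also have "\<dots> = f x" using elim fin by (simp add: sum.delta)
      finally show ?case by simp
    qed
  qed
  also have "\<dots> = (\<Sum>a\<in>set_pmf M. integral\<^sup>L (measure_pmf M) (\<lambda>x. indicator {a} x *\<^sub>R f a))"
    by (rule Bochner_Integration.integral_sum) (auto intro!: integrable_scaleR_left integrable_real_indicator simp: measure_pmf.emeasure_eq_measure)
  also have "\<dots> = (\<Sum>a\<in>set_pmf M. integral\<^sup>L (measure_pmf M) (indicator {a}) *\<^sub>R f a)"
    by (intro sum.cong refl integral_scaleR_left integrable_real_indicator) (auto simp: measure_pmf.emeasure_eq_measure)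
  also have "\<dots> = (\<Sum>a\<in>set_pmf M. pmf M a *\<^sub>R f a)"
    by (intro sum.cong refl) (simp add: measure_pmf_single)
  finally show ?thesis .
qed

locale draws = prob_space Pr for Pr :: "'w measure" +
  fixes D :: "nat \<Rightarrow> 'w \<Rightarrow> 'd::countable" and dist :: "'d pmf"
  assumes indep: "indep_vars (\<lambda>_. count_space UNIV) D UNIV"
    and distr_D: "\<And>j. distr Pr (count_space UNIV) (D j) = measure_pmf dist"
    and fin: "finite (set_pmf dist)"
begin

definition hist :: "nat \<Rightarrow> 'w \<Rightarrow> 'd list" where
  "hist k w = map (\<lambda>j. D j w) [0..<k]"

definition Lset :: "nat \<Rightarrow> 'd list set" where
  "Lset k = {l. length l = k \<and> set l \<subseteq> set_pmf dist}"

definition Pl :: "'d list \<Rightarrow> real" where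
  "Pl l = (\<Prod>j<length l. pmf dist (l ! j))"

lemma D_meas[measurable]: "D j \<in> measurable Pr (count_space UNIV)"
  using indep unfolding indep_vars_def by auto

lemma hist_Suc: "hist (Suc k) w = hist k w @ [D k w]"
  unfolding hist_def by simp

lemma hist_take: "j \<le> k \<Longrightarrow> hist j w = take j (hist k w)"
  unfolding hist_def by (simp add: take_map)

lemma length_hist[simp]: "length (hist k w) = k" unfolding hist_def by simp

lemma Lset_finite: "finite (Lset k)"
  unfolding Lset_def using finite_lists_length_eq[OF fin, of k] by (simp add: conj_commute)

lemma hist_set_eq: "length l = k \<Longrightarrow> {w \<in> space Pr. hist k w = l} = {w \<in> space Pr. \<forall>j<k. D j w = l ! j}"
  unfolding hist_def by (auto simp: list_eq_iff_nth_eq)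

lemma hist_set_sets: "{w \<in> space Pr. hist k w = l} \<in> sets Pr"
proof (cases "length l = k")
  case True
  then show ?thesis unfolding hist_set_eq[OF True] by measurable
next
  case False
  then have "{w \<in> space Pr. hist k w = l} = {}" by auto
  then show ?thesis by (metis sets.empty_sets)
qed

lemma hist_meas: "hist k \<in> measurable Pr (count_space UNIV)"
proof -
  have "hist k -` {l} \<inter> space Pr \<in> sets Pr" for l
  proof -
    have "hist k -` {l} \<inter> space Pr = {w \<in> space Pr. hist k w = l}" by auto
    then show ?thesis using hist_set_sets by simp
  qed
  then show ?thesis by (simp add: measurable_count_space_eq2_countable)
qed

lemma prob_D: "prob {w \<in> space Pr. D j w = d} = pmf dist d"
proof -
  have "measure (distr Pr (count_space UNIV) (D j)) {d} = prob (D j -` {d} \<inter> space Pr)"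
    by (rule measure_distr) auto
  moreover have "D j -` {d} \<inter> space Pr = {w \<in> space Pr. D j w = d}" by auto
  ultimately show ?thesis using distr_D by (simp add: measure_pmf_single)
qed

lemma prob_hist: "length l = k \<Longrightarrow> prob {w \<in> space Pr. hist k w = l} = Pl l"
proof (cases "k = 0")
  case True
  assume "length l = k"
  with True have "l = []" by simp
  then show ?thesis using True unfolding Pl_def hist_def by (simp add: prob_space)
next
  case False
  assume len: "length l = k"
  have "{w \<in> space Pr. hist k w = l} = (\<Inter>j\<in>{0..<k}. D j -` {l ! j} \<inter> space Pr)"
    unfolding hist_set_eq[OF len] using False by auto
  moreover have "prob (\<Inter>j\<in>{0..<k}. D j -` {l ! j} \<inter> space Pr) = (\<Prod>j\<in>{0..<k}. prob (D j -` {l ! j} \<inter> space Pr))"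
    by (rule indep_varsD[OF indep]) (use False in auto)
  ultimately have "prob {w \<in> space Pr. hist k w = l} = (\<Prod>j\<in>{0..<k}. prob (D j -` {l ! j} \<inter> space Pr))"
    by simp
  also have "\<dots> = (\<Prod>j\<in>{0..<k}. pmf dist (l ! j))"
  proof (rule prod.cong)
    fix j
    have "D j -` {l ! j} \<inter> space Pr = {w \<in> space Pr. D j w = l ! j}" by auto
    then show "prob (D j -` {l ! j} \<inter> space Pr) = pmf dist (l ! j)" using prob_D by simp
  qed simp
  finally show ?thesis unfolding Pl_def len by (simp add: atLeast0LessThan)
qed

lemma AE_hist: "AE w in Pr. hist k w \<in> Lset k"
proof -
  have "AE w in Pr. D j w \<in> set_pmf dist" for j
  proof (rule AE_distrD[OF D_meas])
    show "AE x in distr Pr (count_space UNIV) (D j). x \<in> set_pmf dist"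
      unfolding distr_D by (rule AE_measure_pmf)
  qed
  then have "AE w in Pr. \<forall>j. D j w \<in> set_pmf dist" by (simp add: AE_all_countable)
  then show ?thesis by eventually_elim (auto simp: Lset_def hist_def)
qed

lemma integral_hist: "integral\<^sup>L Pr (\<lambda>w. F (hist k w)) = (\<Sum>l\<in>Lset k. Pl l * F l)"
proof -
  define E where "E l = {w \<in> space Pr. hist k w = l}" for l
  have Esets: "E l \<in> sets Pr" for l unfolding E_def by (rule hist_set_sets)
  have "integral\<^sup>L Pr (\<lambda>w. F (hist k w)) = integral\<^sup>L Pr (\<lambda>w. \<Sum>l\<in>Lset k. F l * indicator (E l) w)"
  proof (rule integral_cong_AE)
    show "(\<lambda>w. F (hist k w)) \<in> borel_measurable Pr"
      using measurable_comp[OF hist_meas, of F borel] by (simp add: comp_def)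
    show "(\<lambda>w. \<Sum>l\<in>Lset k. F l * indicator (E l) w) \<in> borel_measurable Pr"
      using Esets by (intro borel_measurable_sum borel_measurable_times) auto
    show "AE w in Pr. F (hist k w) = (\<Sum>l\<in>Lset k. F l * indicator (E l) w)"
      using AE_hist[of k] AE_space
    proof eventually_elim
      case (elim w)
      have "(\<Sum>l\<in>Lset k. F l * indicator (E l) w) = (\<Sum>l\<in>Lset k. if hist k w = l then F l else 0)"
        using elim by (intro sum.cong) (auto simp: E_def indicator_def)
      also have "\<dots> = F (hist k w)" using elim Lset_finite by (simp add: sum.delta)
      finally show ?case by simp
    qed
  qed
  also have "\<dots> = (\<Sum>l\<in>Lset k. integral\<^sup>L Pr (\<lambda>w. F l * indicator (E l) w))"
  proof (rule Bochner_Integration.integral_sum)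
    fix l show "integrable Pr (\<lambda>w. F l * indicator (E l) w :: real)"
      using Esets[of l] by (intro integrable_mult_right integrable_real_indicator) (auto simp: emeasure_eq_measure)
  qed
  also have "\<dots> = (\<Sum>l\<in>Lset k. F l * prob (E l))"
    using Esets by (intro sum.cong) (auto simp: emeasure_eq_measure)
  also have "\<dots> = (\<Sum>l\<in>Lset k. Pl l * F l)"
    by (intro sum.cong) (auto simp: E_def prob_hist Lset_def)
  finally show ?thesis .
qed

lemma Pl_pos: "l \<in> Lset k \<Longrightarrow> 0 < Pl l"
proof -
  assume "l \<in> Lset k"
  then have "set l \<subseteq> set_pmf dist" unfolding Lset_def by auto
  then have "l ! j \<in> set_pmf dist" if "j < length l" for j using that nth_mem by blast
  then show ?thesis unfolding Pl_def by (intro prod_pos) (auto simp: pmf_positive)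
qed

lemma Pl_nonneg: "0 \<le> Pl l" unfolding Pl_def by (intro prod_nonneg) auto

lemma hist_exists: "l \<in> Lset k \<Longrightarrow> \<exists>w\<in>space Pr. hist k w = l"
proof -
  assume l: "l \<in> Lset k"
  then have len: "length l = k" unfolding Lset_def by auto
  have "prob {w \<in> space Pr. hist k w = l} > 0" using prob_hist[OF len] Pl_pos[OF l] by simp
  then have "{w \<in> space Pr. hist k w = l} \<noteq> {}" by (metis measure_empty less_irrefl)
  then show ?thesis by blast
qed

lemma Lset_Suc: "Lset (Suc k) = (\<lambda>(l, d). l @ [d]) ` (Lset k \<times> set_pmf dist)"
proof
  show "Lset (Suc k) \<subseteq> (\<lambda>(l, d). l @ [d]) ` (Lset k \<times> set_pmf dist)"
  proof
    fix l' assume "l' \<in> Lset (Suc k)"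
    then have "length l' = Suc k" "set l' \<subseteq> set_pmf dist" unfolding Lset_def by auto
    then obtain l d where "l' = l @ [d]" "length l = k" by (metis length_Suc_conv_rev)
    with \<open>set l' \<subseteq> set_pmf dist\<close> show "l' \<in> (\<lambda>(l, d). l @ [d]) ` (Lset k \<times> set_pmf dist)"
      unfolding Lset_def by (auto intro!: image_eqI[where x="(l, d)"])
  qed
qed (auto simp: Lset_def)

lemma sum_Lset_Suc: "(\<Sum>l\<in>Lset (Suc k). Pl l * F l) = (\<Sum>l\<in>Lset k. Pl l * (\<Sum>d\<in>set_pmf dist. pmf dist d * F (l @ [d])))"
proof -
  have inj: "inj_on (\<lambda>(l, d). l @ [d]) (Lset k \<times> set_pmf dist)" by (auto simp: inj_on_def)
  have Pl_app: "Pl (l @ [d]) = Pl l * pmf dist d" for l d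
    unfolding Pl_def by (simp add: lessThan_Suc nth_append mult.commute)
  have "(\<Sum>l\<in>Lset (Suc k). Pl l * F l) = (\<Sum>(l, d)\<in>Lset k \<times> set_pmf dist. Pl (l @ [d]) * F (l @ [d]))"
    unfolding Lset_Suc by (subst sum.reindex[OF inj]) (simp add: case_prod_beta)
  also have "\<dots> = (\<Sum>l\<in>Lset k. \<Sum>d\<in>set_pmf dist. Pl (l @ [d]) * F (l @ [d]))"
    by (rule sum.cartesian_product[symmetric])
  also have "\<dots> = (\<Sum>l\<in>Lset k. Pl l * (\<Sum>d\<in>set_pmf dist. pmf dist d * F (l @ [d])))"
    by (simp add: Pl_app sum_distrib_left mult.assoc)
  finally show ?thesis .
qed

end


context spos
begin

lemma resolvent_unique:
  assumes Amono: "monotone_setop A" and Lip: "lipschitz_wrt S L (\<lambda>v. gam *\<^sub>R M v - S v)"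
    and L1: "L < 1" and gam: "gam > 0"
    and z: "v0 - M z \<in> A z" and z': "v0 - M z' \<in> A z'"
  shows "z = z'"
proof -
  define d where "d = z - z'"
  have m: "0 \<le> inner ((v0 - M z) - (v0 - M z')) (z - z')"
    using Amono z z' unfolding monotone_setop_def by blast
  then have m2: "inner (M z - M z') d \<le> 0" unfolding d_def
    by (simp add: inner_diff_left)
  have e: "gam *\<^sub>R (M z - M z') = S d + ((gam *\<^sub>R M z - S z) - (gam *\<^sub>R M z' - S z'))"
    unfolding d_def by (simp add: S_diff algebra_simps)
  have lp: "norm_S (inv S) ((gam *\<^sub>R M z - S z) - (gam *\<^sub>R M z' - S z')) \<le> L * norm_S S d"
    using Lip unfolding lipschitz_wrt_def d_def by blast
  have "inner ((gam *\<^sub>R M z - S z) - (gam *\<^sub>R M z' - S z')) d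
      \<ge> - (norm_S (inv S) ((gam *\<^sub>R M z - S z) - (gam *\<^sub>R M z' - S z')) * norm_S S d)"
    by (rule CSi_ge)
  moreover have "norm_S (inv S) ((gam *\<^sub>R M z - S z) - (gam *\<^sub>R M z' - S z')) * norm_S S d \<le> L * norm_S S d * norm_S S d"
    using lp nS_nonneg by (intro mult_right_mono) auto
  ultimately have i1: "inner ((gam *\<^sub>R M z - S z) - (gam *\<^sub>R M z' - S z')) d \<ge> - (L * (norm_S S d)\<^sup>2)"
    by (simp add: power2_eq_square mult.assoc)
  have "gam * inner (M z - M z') d = inner (S d) d + inner ((gam *\<^sub>R M z - S z) - (gam *\<^sub>R M z' - S z')) d"
    using arg_cong[OF e, of "\<lambda>v. inner v d"] by (simp add: inner_add_left)
  then have "inner (S d) d - L * inner (S d) d \<le> gam * inner (M z - M z') d"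
    using i1 by (simp add: nS_sq)
  also have "\<dots> \<le> 0" using m2 gam by (simp add: mult_nonneg_nonpos)
  finally have "(1 - L) * inner (S d) d \<le> 0" by (simp add: algebra_simps)
  then have "inner (S d) d \<le> 0" using L1 by (simp add: mult_le_0_iff)
  then have "inner (S d) d = 0" using Ssq_nonneg[of d] by linarith
  then have "d = 0" by (rule Ssq_zero)
  then show ?thesis unfolding d_def by simp
qed

end

theorem theorem4p2:
  fixes Pr :: "'w measure"
    and S :: "'a::{real_inner, complete_space, second_countable_topology} \<Rightarrow> 'a"
    and A :: "'a \<Rightarrow> 'a set"
    and N :: nat and Bi :: "nat \<Rightarrow> 'a \<Rightarrow> 'a" and B :: "'a \<Rightarrow> 'a"
    and Q :: "nat pmf" and Bxi :: "nat \<Rightarrow> 'a \<Rightarrow> 'a" and \<theta> :: real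
    and C :: "'a \<Rightarrow> 'a" and \<beta> :: real and \<mu> :: real
    and Mk :: "nat \<Rightarrow> 'a \<Rightarrow> 'a" and Lk :: "nat \<Rightarrow> real"
    and xstar :: 'a
    and p L \<epsilon>3 \<alpha> \<gamma> Lbar c :: real
    and x0 u0 :: 'a
    and x om u y xbar :: "nat \<Rightarrow> 'w \<Rightarrow> 'a"
    and \<xi> :: "nat \<Rightarrow> 'w \<Rightarrow> nat" and coin :: "nat \<Rightarrow> 'w \<Rightarrow> bool"
  assumes Pr: "prob_space Pr"
    \<comment> \<open>(A2): metric S\<close>
    and S: "strongly_pos_sa S"
    \<comment> \<open>(A2)(i)\<close>
    and A: "maximal_monotone A"
    \<comment> \<open>(A2)(ii)\<close>
    and Bi: "\<And>i. i \<in> {1..N} \<Longrightarrow> monotone_op (Bi i) \<and> lipschitz_op (Bi i)"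
    and B_def: "\<And>z. B z = (\<Sum>i\<in>{1..N}. Bi i z)"
    and Q_supp: "set_pmf Q \<subseteq> {1..N}"
    and oracle_unbiased: "\<And>z. measure_pmf.expectation Q (\<lambda>i. Bxi i z) = B z"
    and oracle_var: "\<And>z v. measure_pmf.expectation Q (\<lambda>i. (norm_S (inv S) (Bxi i z - Bxi i v))\<^sup>2)
                        \<le> \<theta>\<^sup>2 * (norm_S S (z - v))\<^sup>2"
    and \<theta>_pos: "\<theta> > 0"
    \<comment> \<open>(A2)(iii)\<close>
    and \<beta>_pos: "\<beta> > 0"
    and C: "cocoercive_wrt S \<beta> C"
    \<comment> \<open>strong monotonicity of B; x* the solution (A2)(iv)\<close>
    and \<mu>_pos: "\<mu> > 0"
    and B_strong: "strongly_monotone_wrt S \<mu> B"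
    and xstar: "- (B xstar + C xstar) \<in> A xstar"
    \<comment> \<open>parameters\<close>
    and p: "0 < p" "p < 1"
    and L: "L \<ge> (3 - p) / 2"
    and \<epsilon>3: "\<epsilon>3 > 0"
    and \<alpha>: "\<alpha> > 0"
    and Lk_nonneg: "\<And>k. 0 \<le> Lk k"
    and Lk_lt1: "\<And>k. Lk k < 1"
    and Lk_alpha: "\<And>k. Lk k + \<alpha> \<le> (1 - sqrt p) / 4"
    and Lbar: "Lbar = Sup (range Lk)"
    and \<gamma>_def: "\<gamma> = (if Lbar = 0 then min (sqrt p / (2 * \<theta>)) (p / \<beta>)
                   else min (min (sqrt p / (2 * \<theta>)) (p / \<beta>)) (\<alpha> / (Lbar * \<theta>)))"
    \<comment> \<open>(A2)(v)\<close>
    and Mk: "\<And>k. lipschitz_wrt S (Lk k) (\<lambda>v. \<gamma> *\<^sub>R Mk k v - S v)"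
    \<comment> \<open>0 \<le> c \<le> c_k for all k \<ge> 1\<close>
    and c_nonneg: "0 \<le> c"
    and c_le1: "\<And>k. k \<ge> 1 \<Longrightarrow> c \<le> \<gamma> * \<mu> / (1 + Lk k / (2 * L * \<epsilon>3))"
    and c_le2: "\<And>k. k \<ge> 1 \<Longrightarrow> Lk k \<noteq> 0 \<Longrightarrow>
        c \<le> 2 * L * (1 - p - Lk (k - 1) - \<alpha> - (1 - p) * (\<alpha> + Lk k)) / ((1 - p) * Lk k * (\<epsilon>3 + 1))"
    and c_le3: "\<And>k. k \<ge> 1 \<Longrightarrow>
        c \<le> L * p * (1 - sqrt p - 4 * (Lk k + \<alpha>)) / (2 * (1 - p) * (4 + p) + 2 * p * Lk k * (\<epsilon>3 + 1))"
    \<comment> \<open>random draws: (xi_k, coin_k) ~ Q x Bernoulli(p), independent over k\<close>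
    and draws_indep: "prob_space.indep_vars Pr (\<lambda>_. count_space UNIV) (\<lambda>k w. (\<xi> k w, coin k w)) UNIV"
    and draws_distr: "\<And>k. distr Pr (count_space UNIV) (\<lambda>w. (\<xi> k w, coin k w))
                          = measure_pmf (pair_pmf Q (bernoulli_pmf p))"
    \<comment> \<open>Algorithm SVR-NFBHF-M with lambda = 1 - p\<close>
    and init_x: "\<And>w. w \<in> space Pr \<Longrightarrow> x 0 w = x0"
    and init_u: "\<And>w. w \<in> space Pr \<Longrightarrow> u 0 w = u0"
    and init_om: "\<And>w. w \<in> space Pr \<Longrightarrow> om 0 w = x0"
    and step_xbar: "\<And>k w. w \<in> space Pr \<Longrightarrow> xbar k w = (1 - p) *\<^sub>R x k w + (1 - (1 - p)) *\<^sub>R om k w"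
    and step_y: "\<And>k w. w \<in> space Pr \<Longrightarrow>
        (Mk k (xbar k w) - (B (om k w) + C (om k w)) + (1 / \<gamma>) *\<^sub>R u k w) - Mk k (y k w) \<in> A (y k w)"
    and step_u: "\<And>k w. w \<in> space Pr \<Longrightarrow>
        u (Suc k) w = (\<gamma> *\<^sub>R Mk k (y k w) - S (y k w)) - (\<gamma> *\<^sub>R Mk k (xbar k w) - S (xbar k w))"
    and step_x: "\<And>k w. w \<in> space Pr \<Longrightarrow>
        x (Suc k) w = y k w - \<gamma> *\<^sub>R inv S (Bxi (\<xi> k w) (y k w)) + \<gamma> *\<^sub>R inv S (Bxi (\<xi> k w) (om k w))"
    and step_om: "\<And>k w. w \<in> space Pr \<Longrightarrow> om (Suc k) w = (if coin k w then x (Suc k) w else om k w)"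
  shows "\<forall>k\<ge>1. (1 - p - Lk k) * prob_space.expectation Pr (\<lambda>w. (norm_S S (x (Suc k) w - xstar))\<^sup>2)
           \<le> prob_space.expectation Pr (\<lambda>w. (1 - p) * (norm_S S (x 1 w - xstar))\<^sup>2
                  + (norm_S S (om 1 w - xstar))\<^sup>2
                  + (2 * inner (u 1 w) (x 1 w - xstar) + Lk 0 * (norm_S S (y 0 w - xbar 0 w))\<^sup>2))
             / (1 + c / (2 * L)) ^ k"
proof -
  interpret spos S using S by unfold_locales
  interpret prob_space Pr using Pr .
  define q where "q = sqrt p"
  have q: "0 < q" "q < 1" "p = q^2" unfolding q_def using p by (auto simp: real_sqrt_lt_1_iff)
  have finQ: "finite (set_pmf Q)" using Q_supp by (rule finite_subset) simp
  define D where "D k w = (\<xi> k w, coin k w)" for k w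
  define dist where "dist = pair_pmf Q (bernoulli_pmf p)"
  have setdist: "set_pmf dist = set_pmf Q \<times> UNIV" unfolding dist_def using p by simp
  interpret dr: draws Pr D dist
  proof unfold_locales
    show "indep_vars (\<lambda>_. count_space UNIV) D UNIV" using draws_indep unfolding D_def .
    show "distr Pr (count_space UNIV) (D j) = measure_pmf dist" for j
      using draws_distr[of j] unfolding D_def dist_def by (simp add: comp_def)
    show "finite (set_pmf dist)" unfolding setdist using finQ by simp
  qed
  have L0: "L > 0" using L p by simp
  define r where "r = c / (2 * L)"
  have r0: "0 \<le> r" unfolding r_def using c_nonneg L0 by simp
  have Lk_le: "Lk j \<le> (1 - q) / 4" for j using Lk_alpha[of j] \<alpha> unfolding q_def by simp
  have bdd: "bdd_above (range Lk)" unfolding bdd_above_def using Lk_lt1 by (metis less_imp_le rangeE)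
  have Lbar0: "0 \<le> Lbar" unfolding Lbar using cSup_upper[OF rangeI bdd, of 0] Lk_nonneg[of 0] by simp
  have gam_le1: "\<gamma> \<le> sqrt p / (2 * \<theta>)" and gam_le2: "\<gamma> \<le> p / \<beta>"
    unfolding \<gamma>_def by auto
  have gam0: "\<gamma> > 0"
  proof -
    have a: "sqrt p / (2 * \<theta>) > 0" "p / \<beta> > 0" using p \<theta>_pos \<beta>_pos by auto
    show ?thesis
    proof (cases "Lbar = 0")
      case True then show ?thesis unfolding \<gamma>_def using a by simp
    next
      case False
      then have "Lbar > 0" using Lbar0 by simp
      then have "\<alpha> / (Lbar * \<theta>) > 0" using \<alpha> \<theta>_pos by simp
      then show ?thesis unfolding \<gamma>_def using a False by simp
    qed
  qed
  have g: "\<gamma> * \<theta> \<le> q / 2" using gam_le1 \<theta>_pos unfolding q_def by (simp add: pos_le_divide_eq mult.commute)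
  have gb: "\<gamma> * \<beta> \<le> p" using gam_le2 \<beta>_pos by (simp add: pos_le_divide_eq)
  have gm: "r * (6 - 2 * p) + 2 * r * Lk k / \<epsilon>3 \<le> 2 * (\<gamma> * \<mu>)" if k1: "k \<ge> 1" for k
  proof -
    define den where "den = 1 + Lk k / (2 * L * \<epsilon>3)"
    have den0: "den > 0" unfolding den_def using Lk_nonneg[of k] L0 \<epsilon>3 by (simp add: add_pos_nonneg)
    have "c \<le> \<gamma> * \<mu> / den" using c_le1[OF k1] unfolding den_def .
    then have "c * den \<le> \<gamma> * \<mu>" using den0 by (simp add: pos_le_divide_eq)
    moreover have "c * den = 2 * (L * r) + r * Lk k / \<epsilon>3"
      unfolding den_def r_def using L0 \<epsilon>3 by (simp add: field_simps)
    moreover have "r * (6 - 2 * p) \<le> r * (4 * L)" using r0 L by (intro mult_left_mono) auto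
    moreover have "r * (4 * L) = 4 * (L * r)" by simp
    moreover have "0 \<le> r * Lk k / \<epsilon>3" using r0 Lk_nonneg[of k] \<epsilon>3 by simp
    moreover have "2 * r * Lk k / \<epsilon>3 = 2 * (r * Lk k / \<epsilon>3)" by simp
    ultimately show ?thesis by linarith
  qed
  have c3: "4 * r * ((1 - p) * (4 + p) + p * Lk k * (\<epsilon>3 + 1)) + 4 * p * Lk k \<le> p * (1 - q)" if k1: "k \<ge> 1" for k
  proof -
    define den where "den = 2 * (1 - p) * (4 + p) + 2 * p * Lk k * (\<epsilon>3 + 1)"
    have den0: "den > 0" unfolding den_def using p Lk_nonneg[of k] \<epsilon>3
      by (intro add_pos_nonneg mult_pos_pos mult_nonneg_nonneg) auto
    have "c \<le> L * p * (1 - q - 4 * (Lk k + \<alpha>)) / den" using c_le3[OF k1] unfolding den_def q_def .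
    then have "c * den \<le> L * p * (1 - q - 4 * (Lk k + \<alpha>))" using den0 by (simp add: pos_le_divide_eq)
    moreover have "c * den = L * (4 * r * ((1 - p) * (4 + p) + p * Lk k * (\<epsilon>3 + 1)))"
      unfolding den_def r_def using L0 by (simp add: field_simps)
    ultimately have "L * (4 * r * ((1 - p) * (4 + p) + p * Lk k * (\<epsilon>3 + 1))) \<le> L * (p * (1 - q - 4 * (Lk k + \<alpha>)))"
      by (simp add: mult.assoc)
    then have "4 * r * ((1 - p) * (4 + p) + p * Lk k * (\<epsilon>3 + 1)) \<le> p * (1 - q - 4 * (Lk k + \<alpha>))"
      using L0 by (simp add: mult_le_cancel_left_pos)
    moreover have "0 \<le> p * \<alpha>" using p \<alpha> by simp
    ultimately show ?thesis by (simp add: algebra_simps)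
  qed
  have Amono: "monotone_setop A" using A unfolding maximal_monotone_def by blast
  have Bsum: "B z = (\<Sum>i\<in>set_pmf Q. pmf Q i *\<^sub>R Bxi i z)" for z
    using oracle_unbiased[of z] integral_pmf_finite_nv[OF finQ, of "\<lambda>i. Bxi i z"] by simp
  have unb: "B a - B b = (\<Sum>i\<in>set_pmf Q. pmf Q i *\<^sub>R (Bxi i a - Bxi i b))" for a b
    unfolding Bsum by (simp add: sum_subtractf[symmetric] scaleR_diff_right)
  have var: "(\<Sum>i\<in>set_pmf Q. pmf Q i * (norm_S (inv S) (Bxi i a - Bxi i b))\<^sup>2) \<le> \<theta>\<^sup>2 * (norm_S S (a - b))\<^sup>2" for a b
    using oracle_var[of a b] integral_pmf_finite_nv[OF finQ, of "\<lambda>i. (norm_S (inv S) (Bxi i a - Bxi i b))\<^sup>2"]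
    by simp
  \<comment> \<open>the iterates are functions of the history of draws\<close>
  have yuniq: "y k w = y k w' \<and> xbar k w = xbar k w'"
    if w: "w \<in> space Pr" "w' \<in> space Pr" and e: "x k w = x k w'" "om k w = om k w'" "u k w = u k w'" for k w w'
  proof -
    have xb: "xbar k w = xbar k w'" using step_xbar[OF w(1)] step_xbar[OF w(2)] e by simp
    define v0 where "v0 = Mk k (xbar k w) - (B (om k w) + C (om k w)) + (1 / \<gamma>) *\<^sub>R u k w"
    have i1: "v0 - Mk k (y k w) \<in> A (y k w)" using step_y[OF w(1)] unfolding v0_def .
    have i2: "v0 - Mk k (y k w') \<in> A (y k w')" using step_y[OF w(2)] unfolding v0_def using e xb by simp
    have "y k w = y k w'" by (rule resolvent_unique[OF Amono Mk[of k] Lk_lt1[of k] gam0 i1 i2])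
    then show ?thesis using xb by simp
  qed
  have fac: "\<forall>w\<in>space Pr. \<forall>w'\<in>space Pr. dr.hist k w = dr.hist k w' \<longrightarrow>
      x k w = x k w' \<and> om k w = om k w' \<and> u k w = u k w'" for k
  proof (induction k)
    case 0
    then show ?case using init_x init_u init_om by simp
  next
    case (Suc k)
    show ?case
    proof (intro ballI impI)
      fix w w' assume w: "w \<in> space Pr" "w' \<in> space Pr" and h: "dr.hist (Suc k) w = dr.hist (Suc k) w'"
      then have hk: "dr.hist k w = dr.hist k w'" and dk: "D k w = D k w'" unfolding dr.hist_Suc by auto
      have e: "x k w = x k w'" "om k w = om k w'" "u k w = u k w'" using Suc.IH w hk by blast+
      have ey: "y k w = y k w'" "xbar k w = xbar k w'" using yuniq[OF w e] by auto
      have ex: "\<xi> k w = \<xi> k w'" "coin k w = coin k w'" using dk unfolding D_def by auto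
      have "x (Suc k) w = x (Suc k) w'" using step_x[OF w(1)] step_x[OF w(2)] e ey ex by simp
      moreover have "om (Suc k) w = om (Suc k) w'" using step_om[OF w(1)] step_om[OF w(2)] e ex calculation by simp
      moreover have "u (Suc k) w = u (Suc k) w'" using step_u[OF w(1)] step_u[OF w(2)] ey by simp
      ultimately show "x (Suc k) w = x (Suc k) w' \<and> om (Suc k) w = om (Suc k) w' \<and> u (Suc k) w = u (Suc k) w'" by simp
    qed
  qed
  have facall: "x j w = x j w' \<and> om j w = om j w' \<and> u j w = u j w' \<and> y j w = y j w' \<and> xbar j w = xbar j w'"
    if "j \<le> k" "w \<in> space Pr" "w' \<in> space Pr" "dr.hist k w = dr.hist k w'" for j k w w'
  proof -
    have "dr.hist j w = dr.hist j w'" using dr.hist_take[OF that(1), of w] dr.hist_take[OF that(1), of w'] that(4) by simp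
    then have e: "x j w = x j w'" "om j w = om j w'" "u j w = u j w'" using fac[of j] that(2,3) by blast+
    then show ?thesis using yuniq[OF that(2,3) e] by simp
  qed
  define wit where "wit k l = (SOME w. w \<in> space Pr \<and> dr.hist k w = l)" for k l
  have wit: "wit k l \<in> space Pr \<and> dr.hist k (wit k l) = l" if "\<exists>w\<in>space Pr. dr.hist k w = l" for k l
    unfolding wit_def using that by (metis (mono_tags, lifting) someI_ex)
  have Eform: "integral\<^sup>L Pr G = (\<Sum>l\<in>dr.Lset k. dr.Pl l * G (wit k l))"
    if G: "\<And>w w'. w \<in> space Pr \<Longrightarrow> w' \<in> space Pr \<Longrightarrow> dr.hist k w = dr.hist k w' \<Longrightarrow> G w = G w'" for G k
  proof -
    have "integral\<^sup>L Pr G = integral\<^sup>L Pr (\<lambda>w. G (wit k (dr.hist k w)))"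
    proof (rule Bochner_Integration.integral_cong[OF refl])
      fix w assume w: "w \<in> space Pr"
      then have "wit k (dr.hist k w) \<in> space Pr \<and> dr.hist k (wit k (dr.hist k w)) = dr.hist k w" by (intro wit) auto
      then show "G w = G (wit k (dr.hist k w))" using G w by metis
    qed
    also have "\<dots> = (\<Sum>l\<in>dr.Lset k. dr.Pl l * G (wit k l))" by (rule dr.integral_hist)
    finally show ?thesis .
  qed
  define \<Phi> where "\<Phi> k w = (1 - p) * (norm_S S (x k w - xstar))\<^sup>2 + (norm_S S (om k w - xstar))\<^sup>2
      + (2 * inner (u k w) (x k w - xstar) + Lk (k - 1) * (norm_S S (y (k - 1) w - xbar (k - 1) w))\<^sup>2)" for k w
  have \<Phi>fac: "\<Phi> k w = \<Phi> k w'" if "w \<in> space Pr" "w' \<in> space Pr" "dr.hist k w = dr.hist k w'" for k w w'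
  proof -
    have "x k w = x k w' \<and> om k w = om k w' \<and> u k w = u k w'" using facall[OF le_refl that] by simp
    moreover have "y (k - 1) w = y (k - 1) w' \<and> xbar (k - 1) w = xbar (k - 1) w'" using facall[OF _ that, of "k - 1"] by simp
    ultimately show ?thesis unfolding \<Phi>_def by simp
  qed
  define E where "E k = integral\<^sup>L Pr (\<Phi> k)" for k
  have Ek: "E k = (\<Sum>l\<in>dr.Lset k. dr.Pl l * \<Phi> k (wit k l))" for k
    unfolding E_def by (rule Eform) (rule \<Phi>fac)
  have wit_ok: "wit k l \<in> space Pr \<and> dr.hist k (wit k l) = l" if "l \<in> dr.Lset k" for k l
    using wit dr.hist_exists[OF that] by blast
  have step: "(1 + r) * E (Suc k) \<le> E k" if k1: "k \<ge> 1" for k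
  proof -
    have inner_le: "(1 + r) * (\<Sum>d\<in>set_pmf dist. pmf dist d * \<Phi> (Suc k) (wit (Suc k) (l @ [d]))) \<le> \<Phi> k (wit k l)"
      if l: "l \<in> dr.Lset k" for l
    proof -
      define w0 where "w0 = wit k l"
      have w0: "w0 \<in> space Pr" "dr.hist k w0 = l" using wit_ok[OF l] unfolding w0_def by auto
      define xn where "xn i = y k w0 - \<gamma> *\<^sub>R inv S (Bxi i (y k w0)) + \<gamma> *\<^sub>R inv S (Bxi i (om k w0))" for i
      define u' where "u' = (\<gamma> *\<^sub>R Mk k (y k w0) - S (y k w0)) - (\<gamma> *\<^sub>R Mk k (xbar k w0) - S (xbar k w0))"
      define \<phi> where "\<phi> d = (1 - p) * (norm_S S (xn (fst d) - xstar))\<^sup>2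
          + (norm_S S ((if snd d then xn (fst d) else om k w0) - xstar))\<^sup>2
          + (2 * inner u' (xn (fst d) - xstar) + Lk k * (norm_S S (y k w0 - xbar k w0))\<^sup>2)" for d
      have phi_eq: "\<Phi> (Suc k) (wit (Suc k) (l @ [d])) = \<phi> d" if d: "d \<in> set_pmf dist" for d
      proof -
        define w1 where "w1 = wit (Suc k) (l @ [d])"
        have ld: "l @ [d] \<in> dr.Lset (Suc k)" unfolding dr.Lset_Suc using l d by auto
        have w1: "w1 \<in> space Pr" "dr.hist (Suc k) w1 = l @ [d]" using wit_ok[OF ld] unfolding w1_def by auto
        then have hk: "dr.hist k w1 = dr.hist k w0" and dk: "D k w1 = d" using w0 unfolding dr.hist_Suc by auto
        have e: "x k w1 = x k w0" "om k w1 = om k w0" "u k w1 = u k w0" "y k w1 = y k w0" "xbar k w1 = xbar k w0"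
          using facall[OF le_refl w1(1) w0(1) hk] by auto
        have ex: "\<xi> k w1 = fst d" "coin k w1 = snd d" using dk unfolding D_def by auto
        have X: "x (Suc k) w1 = xn (fst d)" using step_x[OF w1(1)] e ex unfolding xn_def by simp
        have Om: "om (Suc k) w1 = (if snd d then xn (fst d) else om k w0)" using step_om[OF w1(1)] e ex X by simp
        have U: "u (Suc k) w1 = u'" using step_u[OF w1(1)] e unfolding u'_def by simp
        show ?thesis unfolding w1_def[symmetric] \<Phi>_def \<phi>_def using X Om U e by simp
      qed
      define nO where "nO = norm_S S (om k w0 - xstar)"
      define nA where "nA = norm_S S (y k w0 - xbar k w0)"
      have sum1: "(\<Sum>d\<in>set_pmf dist. pmf dist d * \<Phi> (Suc k) (wit (Suc k) (l @ [d])))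
          = (\<Sum>d\<in>set_pmf dist. pmf dist d * \<phi> d)"
        by (intro sum.cong refl) (simp add: phi_eq)
      have sum2: "(\<Sum>d\<in>set_pmf dist. pmf dist d * \<phi> d)
          = (\<Sum>i\<in>set_pmf Q. pmf Q i * ((norm_S S (xn i - xstar))\<^sup>2 + 2 * inner u' (xn i - xstar))) + ((1 - p) * nO\<^sup>2 + Lk k * nA\<^sup>2)"
      proof -
        have "(\<Sum>d\<in>set_pmf dist. pmf dist d * \<phi> d)
            = (\<Sum>i\<in>set_pmf Q. \<Sum>b\<in>UNIV. pmf dist (i, b) * \<phi> (i, b))"
          unfolding setdist sum.cartesian_product by simp
        also have "\<dots> = (\<Sum>i\<in>set_pmf Q. pmf Q i * (((norm_S S (xn i - xstar))\<^sup>2 + 2 * inner u' (xn i - xstar)) + ((1 - p) * nO\<^sup>2 + Lk k * nA\<^sup>2)))"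
        proof (intro sum.cong refl)
          fix i
          have "(\<Sum>b\<in>UNIV. pmf dist (i, b) * \<phi> (i, b)) = pmf Q i * (p * \<phi> (i, True) + (1 - p) * \<phi> (i, False))"
            unfolding dist_def pmf_pair UNIV_bool using p by (simp add: algebra_simps)
          also have "p * \<phi> (i, True) + (1 - p) * \<phi> (i, False)
              = ((norm_S S (xn i - xstar))\<^sup>2 + 2 * inner u' (xn i - xstar)) + ((1 - p) * nO\<^sup>2 + Lk k * nA\<^sup>2)"
            unfolding \<phi>_def nO_def nA_def by (simp add: algebra_simps)
          finally show "(\<Sum>b\<in>UNIV. pmf dist (i, b) * \<phi> (i, b)) = pmf Q i * (((norm_S S (xn i - xstar))\<^sup>2 + 2 * inner u' (xn i - xstar)) + ((1 - p) * nO\<^sup>2 + Lk k * nA\<^sup>2))" .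
        qed
        also have "\<dots> = (\<Sum>i\<in>set_pmf Q. pmf Q i * ((norm_S S (xn i - xstar))\<^sup>2 + 2 * inner u' (xn i - xstar)))
            + (\<Sum>i\<in>set_pmf Q. pmf Q i) * ((1 - p) * nO\<^sup>2 + Lk k * nA\<^sup>2)"
          by (simp add: distrib_left sum.distrib sum_distrib_right)
        also have "(\<Sum>i\<in>set_pmf Q. pmf Q i) = 1" using finQ by (simp add: sum_pmf_eq_1)
        finally show ?thesis by simp
      qed
      obtain k' where k': "k = Suc k'" using k1 by (cases k) auto
      define U where "U = norm_S S (y k' w0 - xbar k' w0)"
      have ub: "norm_S (inv S) (u k w0) \<le> Lk (k - 1) * U"
        using step_u[OF w0(1), of k'] Mk[of k'] unfolding lipschitz_wrt_def U_def k' by simp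
      have xbeq: "xbar k w0 = (1 - p) *\<^sub>R x k w0 + p *\<^sub>R om k w0" using step_xbar[OF w0(1)] by simp
      have os: "(1 + r) * ((\<Sum>i\<in>set_pmf Q. pmf Q i * ((norm_S S (xn i - xstar))\<^sup>2 + 2 * inner u' (xn i - xstar)))
            + (1 - p) * (norm_S S (om k w0 - xstar))\<^sup>2 + Lk k * (norm_S S (y k w0 - xbar k w0))\<^sup>2)
         \<le> (1 - p) * (norm_S S (x k w0 - xstar))\<^sup>2 + (norm_S S (om k w0 - xstar))\<^sup>2 + 2 * inner (u k w0) (x k w0 - xstar) + Lk (k - 1) * U\<^sup>2"
      proof (rule one_step[OF Amono xstar step_y[OF w0(1)] xbeq u'_def Mk[of k] ub _ finQ unb var _ C B_strong q r0
            Lk_nonneg[of k] Lk_nonneg[of "k - 1"] Lk_le[of "k - 1"] \<epsilon>3 gam0 _ \<beta>_pos g gb gm[OF k1] c3[OF k1]])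
        show "0 \<le> U" unfolding U_def by (rule nS_nonneg)
        show "xn i = y k w0 - \<gamma> *\<^sub>R inv S (Bxi i (y k w0)) + \<gamma> *\<^sub>R inv S (Bxi i (om k w0))" for i
          unfolding xn_def ..
        show "0 \<le> \<theta>" using \<theta>_pos by simp
      qed
      have "\<Phi> k w0 = (1 - p) * (norm_S S (x k w0 - xstar))\<^sup>2 + (norm_S S (om k w0 - xstar))\<^sup>2 + 2 * inner (u k w0) (x k w0 - xstar) + Lk (k - 1) * U\<^sup>2"
        unfolding \<Phi>_def U_def k' by simp
      then show ?thesis using os unfolding sum1 sum2 w0_def[symmetric] nO_def nA_def by (simp add: add.assoc)
    qed
    have "E (Suc k) = (\<Sum>l\<in>dr.Lset k. dr.Pl l * (\<Sum>d\<in>set_pmf dist. pmf dist d * \<Phi> (Suc k) (wit (Suc k) (l @ [d]))))"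
      unfolding Ek by (rule dr.sum_Lset_Suc)
    then have "(1 + r) * E (Suc k) = (\<Sum>l\<in>dr.Lset k. dr.Pl l * ((1 + r) * (\<Sum>d\<in>set_pmf dist. pmf dist d * \<Phi> (Suc k) (wit (Suc k) (l @ [d])))))"
      by (simp add: sum_distrib_left algebra_simps)
    also have "\<dots> \<le> (\<Sum>l\<in>dr.Lset k. dr.Pl l * \<Phi> k (wit k l))"
      by (intro sum_mono mult_left_mono inner_le dr.Pl_nonneg)
    also have "\<dots> = E k" unfolding Ek ..
    finally show ?thesis .
  qed
  have rpos: "0 < 1 + r" using r0 by simp
  have Erec: "E (Suc k) * (1 + r) ^ k \<le> E 1" for k
  proof (induction k)
    case 0 then show ?case by simp
  next
    case (Suc k)
    have "E (Suc (Suc k)) * (1 + r) ^ Suc k = ((1 + r) * E (Suc (Suc k))) * (1 + r) ^ k" by (simp add: algebra_simps)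
    also have "\<dots> \<le> E (Suc k) * (1 + r) ^ k" using step[of "Suc k"] rpos by (intro mult_right_mono) auto
    also have "\<dots> \<le> E 1" using Suc .
    finally show ?case .
  qed
  have E1: "E 1 = prob_space.expectation Pr (\<lambda>w. (1 - p) * (norm_S S (x 1 w - xstar))\<^sup>2
                  + (norm_S S (om 1 w - xstar))\<^sup>2
                  + (2 * inner (u 1 w) (x 1 w - xstar) + Lk 0 * (norm_S S (y 0 w - xbar 0 w))\<^sup>2))"
    unfolding E_def \<Phi>_def by simp
  show ?thesis
  proof (intro allI impI)
    fix k :: nat assume k1: "k \<ge> 1"
    define G where "G w = (norm_S S (x (Suc k) w - xstar))\<^sup>2" for w
    have Gfac: "G w = G w'" if "w \<in> space Pr" "w' \<in> space Pr" "dr.hist (Suc k) w = dr.hist (Suc k) w'" for w w'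
      unfolding G_def using facall[OF le_refl that] by simp
    have pt: "(1 - p - Lk k) * G w \<le> \<Phi> (Suc k) w" if w: "w \<in> space Pr" for w
    proof -
      define nX where "nX = norm_S S (x (Suc k) w - xstar)"
      define nA where "nA = norm_S S (y k w - xbar k w)"
      have "norm_S (inv S) (u (Suc k) w) \<le> Lk k * nA"
        using step_u[OF w, of k] Mk[of k] unfolding lipschitz_wrt_def nA_def by simp
      moreover have "- (norm_S (inv S) (u (Suc k) w) * nX) \<le> inner (u (Suc k) w) (x (Suc k) w - xstar)"
        unfolding nX_def by (rule CSi_ge)
      moreover have "0 \<le> nX" unfolding nX_def by (rule nS_nonneg)
      ultimately have i: "- (Lk k * nA * nX) \<le> inner (u (Suc k) w) (x (Suc k) w - xstar)"
        by (smt (verit) mult_right_mono)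
      have "2 * (Lk k * nA * nX) \<le> Lk k * nA\<^sup>2 + Lk k * nX\<^sup>2"
      proof -
        have "0 \<le> Lk k * (nA - nX)\<^sup>2" using Lk_nonneg[of k] by simp
        then show ?thesis by (simp add: power2_eq_square algebra_simps)
      qed
      moreover have "0 \<le> (norm_S S (om (Suc k) w - xstar))\<^sup>2" by simp
      moreover have "(1 - p - Lk k) * nX\<^sup>2 = (1 - p) * nX\<^sup>2 - Lk k * nX\<^sup>2" by (simp add: algebra_simps)
      moreover have "\<Phi> (Suc k) w = (1 - p) * nX\<^sup>2 + (norm_S S (om (Suc k) w - xstar))\<^sup>2
          + (2 * inner (u (Suc k) w) (x (Suc k) w - xstar) + Lk k * nA\<^sup>2)"
        unfolding \<Phi>_def nX_def nA_def by simp
      moreover have "(1 - p - Lk k) * G w = (1 - p - Lk k) * nX\<^sup>2" unfolding G_def nX_def ..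
      ultimately show ?thesis using i by linarith
    qed
    have IG: "integral\<^sup>L Pr G = (\<Sum>l\<in>dr.Lset (Suc k). dr.Pl l * G (wit (Suc k) l))"
      by (rule Eform) (rule Gfac)
    have "(1 - p - Lk k) * integral\<^sup>L Pr G = (\<Sum>l\<in>dr.Lset (Suc k). dr.Pl l * ((1 - p - Lk k) * G (wit (Suc k) l)))"
      unfolding IG by (simp add: sum_distrib_left mult.left_commute)
    also have "\<dots> \<le> (\<Sum>l\<in>dr.Lset (Suc k). dr.Pl l * \<Phi> (Suc k) (wit (Suc k) l))"
      using wit_ok by (intro sum_mono mult_left_mono pt dr.Pl_nonneg) auto
    also have "\<dots> = E (Suc k)" unfolding Ek ..
    also have "\<dots> \<le> E 1 / (1 + r) ^ k" using Erec[of k] rpos by (simp add: pos_le_divide_eq)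
    finally show "(1 - p - Lk k) * prob_space.expectation Pr (\<lambda>w. (norm_S S (x (Suc k) w - xstar))\<^sup>2)
           \<le> prob_space.expectation Pr (\<lambda>w. (1 - p) * (norm_S S (x 1 w - xstar))\<^sup>2
                  + (norm_S S (om 1 w - xstar))\<^sup>2
                  + (2 * inner (u 1 w) (x 1 w - xstar) + Lk 0 * (norm_S S (y 0 w - xbar 0 w))\<^sup>2))
             / (1 + c / (2 * L)) ^ k"
      unfolding E1 G_def r_def .
  qed
qed



end
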